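(* Let $r,n$ be positive integers and $s=2$. For each integer $a$ with $0\le a\le r$, the number of valid lattice paths from $(0,0)$ to $(nr,2n)$ whose step sequence begins with $E^aN$ (i.e., exactly $a$ $E$-steps followed by an $N$-step) is $(r-a+1)\binom{r+2}{2}^{n-1}$.
   Context: A lattice path is a path in $\mathbb{Z}^2$ consisting of unit steps north ($N$-steps, adding $(0,1)$) and east ($E$-steps, adding $(1,0)$). For fixed positive integers $r,s$, points $v,w\in\mathbb{Z}^2$ are equivalent if $v-w=\ell(r,s)$ for some $\ell\in\mathbb{Z}$; $[v]$ denotes the class of $v$. A lattice path $P$ is valid if whenever $P$ enters a point $v$ with an $E$-step, every later point of $P$ in $[v]$ is also entered by an $E$-step. Here $s=2$. *)

theory Defs
  imports Main
begin

datatype step = E | N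

definition pt :: "step list \<Rightarrow> nat \<Rightarrow> int \<times> int" where
  "pt ps i = (int (length (filter (\<lambda>x. x = E) (take i ps))),
              int (length (filter (\<lambda>x. x = N) (take i ps))))"

definition equiv_pt :: "nat \<Rightarrow> nat \<Rightarrow> int \<times> int \<Rightarrow> int \<times> int \<Rightarrow> bool" where
  "equiv_pt r s v w \<longleftrightarrow> (\<exists>l::int. fst v - fst w = l * int r \<and> snd v - snd w = l * int s)"

text \<open>Point number i (1 \<le> i \<le> length ps) is entered by step ps ! (i-1).\<close>
definition valid :: "nat \<Rightarrow> nat \<Rightarrow> step list \<Rightarrow> bool" where
  "valid r s ps \<longleftrightarrow>
     (\<forall>i j. 1 \<le> i \<longrightarrow> i < j \<longrightarrow> j \<le> length ps \<longrightarrow> ps ! (i - 1) = E \<longrightarrow>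
        equiv_pt r s (pt ps j) (pt ps i) \<longrightarrow> ps ! (j - 1) = E)"

definition valid_paths :: "nat \<Rightarrow> nat \<Rightarrow> int \<times> int \<Rightarrow> step list set" where
  "valid_paths r s p = {ps. pt ps (length ps) = p \<and> valid r s ps}"

end

theory Submission
  imports Defs
begin

lemma step_cases: "x = E \<or> x = N"
  by (cases x) auto

lemma UNIV_step: "(UNIV :: step set) = {E, N}"
  using step_cases by auto

definition mv :: "nat \<Rightarrow> int \<times> int \<Rightarrow> step \<Rightarrow> int \<times> int" where
  "mv r c s = (case s of E \<Rightarrow> (fst c + 1, snd c)
      | N \<Rightarrow> (if snd c = 0 then (fst c, 1) else (fst c - int r, 0)))"

lemma mv_E[simp]: "mv r c E = (fst c + 1, snd c)"
  by (simp add: mv_def)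

lemma mv_N[simp]: "mv r c N = (if snd c = 0 then (fst c, 1) else (fst c - int r, 0))"
  by (simp add: mv_def)

definition clf :: "nat \<Rightarrow> int \<times> int \<Rightarrow> step list \<Rightarrow> nat \<Rightarrow> int \<times> int" where
  "clf r c ps i = foldl (mv r) c (take i ps)"

lemma clf_0[simp]: "clf r c ps 0 = c"
  by (simp add: clf_def)

lemma clf_Suc: "i < length ps \<Longrightarrow> clf r c ps (Suc i) = mv r (clf r c ps i) (ps ! i)"
  by (simp add: clf_def take_Suc_conv_app_nth)

lemma clf_ge: "length ps \<le> i \<Longrightarrow> clf r c ps i = clf r c ps (length ps)"
  by (simp add: clf_def)

lemma clf_append:
  "clf r c (xs @ ys) i =
     (if i \<le> length xs then clf r c xs i
      else clf r (clf r c xs (length xs)) ys (i - length xs))"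
  by (simp add: clf_def)

definition cell :: "nat \<Rightarrow> int \<times> int \<Rightarrow> int \<times> int" where
  "cell r v = (fst v - int r * (snd v div 2), snd v mod 2)"

definition cnt :: "step \<Rightarrow> step list \<Rightarrow> nat" where
  "cnt x ps = length (filter (\<lambda>y. y = x) ps)"

lemma cnt_append[simp]: "cnt x (xs @ ys) = cnt x xs + cnt x ys"
  by (simp add: cnt_def)

lemma cnt_Nil[simp]: "cnt x [] = 0"
  by (simp add: cnt_def)

lemma cnt_Cons[simp]: "cnt x (y # ys) = (if y = x then Suc (cnt x ys) else cnt x ys)"
  by (simp add: cnt_def)

lemma cnt_replicate[simp]: "cnt x (replicate k y) = (if y = x then k else 0)"
  by (induct k) auto

lemma cnt_rotate1[simp]: "cnt x (rotate1 ys) = cnt x ys"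
  by (cases ys) auto

lemma cnt_rotate[simp]: "cnt x (rotate k ys) = cnt x ys"
  by (induct k) auto

lemma cnt_EN: "cnt E ps + cnt N ps = length ps"
proof (induct ps)
  case Nil then show ?case by simp
next
  case (Cons y ys) then show ?case by (cases y) auto
qed

lemma pt_alt: "pt ps i = (int (cnt E (take i ps)), int (cnt N (take i ps)))"
  by (simp add: pt_def cnt_def)

lemma pt_Suc: "i < length ps \<Longrightarrow>
  pt ps (Suc i) = (if ps ! i = E then (fst (pt ps i) + 1, snd (pt ps i))
                   else (fst (pt ps i), snd (pt ps i) + 1))"
  using step_cases[of "ps ! i"]
  by (auto simp: pt_alt take_Suc_conv_app_nth)

lemma cell_pt: "i \<le> length ps \<Longrightarrow> cell r (pt ps i) = clf r (0,0) ps i"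
proof (induct i)
  case 0 then show ?case by (simp add: cell_def pt_def)
next
  case (Suc i)
  then have i: "i < length ps" by simp
  have IH: "cell r (pt ps i) = clf r (0,0) ps i" using Suc by simp
  obtain x y where xy: "pt ps i = (x, y)" by (cases "pt ps i")
  have C: "clf r (0,0) ps (Suc i) = mv r (cell r (x,y)) (ps ! i)"
    using clf_Suc[OF i] IH xy by simp
  show ?case
  proof (cases "ps ! i")
    case E
    then show ?thesis using C i xy by (simp add: pt_Suc cell_def)
  next
    case N
    have "y mod 2 = 0 \<or> y mod 2 = 1" by auto
    then show ?thesis
    proof
      assume h: "y mod 2 = 0"
      then have "(y + 1) div 2 = y div 2" "(y+1) mod 2 = 1" by presburger+
      then show ?thesis using C i xy N h by (simp add: pt_Suc cell_def)
    next
      assume h: "y mod 2 = 1"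
      then have "(y + 1) div 2 = y div 2 + 1" "(y+1) mod 2 = 0" by presburger+
      then show ?thesis using C i xy N h by (simp add: pt_Suc cell_def algebra_simps)
    qed
  qed
qed

lemma equiv_cell:
  assumes "r > 0"
  shows "equiv_pt r 2 v w \<longleftrightarrow> cell r v = cell r w"
proof
  assume "equiv_pt r 2 v w"
  then obtain l :: int where l: "fst v - fst w = l * int r" "snd v - snd w = l * 2"
    by (auto simp: equiv_pt_def)
  then have sv: "snd v = snd w + 2 * l" by simp
  have "snd v div 2 = snd w div 2 + l" "snd v mod 2 = snd w mod 2" using sv by presburger+
  then show "cell r v = cell r w" using l by (simp add: cell_def algebra_simps)
next
  assume h: "cell r v = cell r w"
  define l where "l = snd v div 2 - snd w div 2"
  have m: "snd v mod 2 = snd w mod 2" and f: "fst v - int r * (snd v div 2) = fst w - int r * (snd w div 2)"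
    using h by (auto simp: cell_def)
  have "snd v - snd w = l * 2" unfolding l_def using m by (simp add: algebra_simps) presburger
  moreover have "fst v - fst w = l * int r" unfolding l_def using f by (simp add: algebra_simps)
  ultimately show "equiv_pt r 2 v w" by (auto simp: equiv_pt_def)
qed

abbreviation cl :: "nat \<Rightarrow> step list \<Rightarrow> nat \<Rightarrow> int \<times> int" where
  "cl r ps i \<equiv> clf r (0,0) ps i"

definition vl :: "nat \<Rightarrow> step list \<Rightarrow> bool" where
  "vl r ps \<longleftrightarrow> (\<forall>i j. 1 \<le> i \<longrightarrow> i < j \<longrightarrow> j \<le> length ps \<longrightarrow> ps ! (i - 1) = E \<longrightarrow>
        cl r ps j = cl r ps i \<longrightarrow> ps ! (j - 1) = E)"

lemma valid_vl: "r > 0 \<Longrightarrow> valid r 2 ps \<longleftrightarrow> vl r ps"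
  unfolding valid_def vl_def
  by (simp add: equiv_cell cell_pt cong: conj_cong imp_cong)

lemma pt_len: "pt ps (length ps) = (int (cnt E ps), int (cnt N ps))"
  by (simp add: pt_alt)


lemma row_inv: "snd c \<in> {0,1} \<Longrightarrow> snd (clf r c ps i) \<in> {0,1}"
proof (induct i)
  case 0 then show ?case by simp
next
  case (Suc i)
  show ?case
  proof (cases "i < length ps")
    case True
    then show ?thesis using Suc using step_cases[of "ps ! i"] by (auto simp: clf_Suc)
  next
    case False
    then have "clf r c ps (Suc i) = clf r c ps i" by (simp add: clf_def)
    then show ?thesis using Suc by simp
  qed
qed

lemma row_cl: "snd (cl r ps i) = 0 \<or> snd (cl r ps i) = 1"
  using row_inv[of "(0,0)" r ps i] by auto

section \<open>Loops\<close>

definition inl :: "nat \<Rightarrow> int \<Rightarrow> int \<Rightarrow> int \<times> int \<Rightarrow> bool" where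
  "inl r g b c \<longleftrightarrow> (snd c = 0 \<and> g \<le> fst c \<and> fst c \<le> b) \<or> (snd c = 1 \<and> b \<le> fst c \<and> fst c \<le> g + int r)"

definition bw :: "nat \<Rightarrow> int \<Rightarrow> int \<Rightarrow> step list" where
  "bw r g b = replicate (nat (b - g)) E @ N # replicate (nat (g + int r - b)) E @ [N]"

definition pos :: "int \<Rightarrow> int \<Rightarrow> int \<times> int \<Rightarrow> nat" where
  "pos g b c = (if snd c = 0 then nat (fst c - g) else nat (b - g) + 1 + nat (fst c - b))"

definition cellAt :: "int \<Rightarrow> int \<Rightarrow> nat \<Rightarrow> int \<times> int" where
  "cellAt g b j = (if j \<le> nat (b - g) then (g + int j, 0) else (b + int j - (b - g) - 1, 1))"

definition stp :: "nat \<Rightarrow> int \<Rightarrow> int \<Rightarrow> int \<times> int \<Rightarrow> step" where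
  "stp r g b c = (if snd c = 0 then (if fst c < b then E else N) else (if fst c < g + int r then E else N))"

definition lw :: "nat \<Rightarrow> int \<Rightarrow> int \<Rightarrow> int \<times> int \<Rightarrow> step list" where
  "lw r g b c = rotate (pos g b c) (bw r g b)"

context
  fixes r :: nat and g b :: int
  assumes gb: "g \<le> b" "b \<le> g + int r"
begin

lemma bw_len: "length (bw r g b) = r + 2"
  using gb by (simp add: bw_def)

lemma bw_nth: "j < r + 2 \<Longrightarrow> bw r g b ! j = stp r g b (cellAt g b j)"
proof -
  assume j: "j < r + 2"
  define D where "D = nat (b - g)"
  have D: "int D = b - g" "D \<le> r" using gb by (auto simp: D_def)
  have n2: "nat (g + int r - b) = r - D" using D by auto
  have bw: "bw r g b = replicate D E @ N # replicate (r - D) E @ [N]"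
    by (simp add: bw_def D_def[symmetric] n2)
  consider "j < D" | "j = D" | "D < j" "j < r + 1" | "j = r + 1" using j by linarith
  then show ?thesis
  proof cases
    case 1 then show ?thesis using D by (simp add: bw nth_append cellAt_def stp_def D_def[symmetric])
  next
    case 2 then show ?thesis using D by (simp add: bw nth_append cellAt_def stp_def D_def[symmetric])
  next
    case 3
    then have "bw r g b ! j = E" using D
      by (simp add: bw nth_append nth_Cons' )
    moreover have "stp r g b (cellAt g b j) = E" using 3 D
      by (simp add: cellAt_def stp_def D_def[symmetric])
    ultimately show ?thesis by simp
  next
    case 4
    then have "bw r g b ! j = N" using D
      by (simp add: bw nth_append nth_Cons')
    moreover have "stp r g b (cellAt g b j) = N" using 4 D
      by (simp add: cellAt_def stp_def D_def[symmetric])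
    ultimately show ?thesis by simp
  qed
qed

lemma cellAt_inl: "j < r + 2 \<Longrightarrow> inl r g b (cellAt g b j)"
  using gb by (auto simp: cellAt_def inl_def)

lemma pos_cellAt: "j < r + 2 \<Longrightarrow> pos g b (cellAt g b j) = j"
  using gb by (auto simp: cellAt_def pos_def)

lemma cellAt_pos: "inl r g b c \<Longrightarrow> cellAt g b (pos g b c) = c \<and> pos g b c < r + 2"
  using gb by (cases c) (auto simp: cellAt_def pos_def inl_def)

lemma cellAt_inj: "i < r + 2 \<Longrightarrow> j < r + 2 \<Longrightarrow> cellAt g b i = cellAt g b j \<Longrightarrow> i = j"
  using pos_cellAt by metis

lemma mv_cellAt: "j < r + 2 \<Longrightarrow> mv r (cellAt g b j) (bw r g b ! j) = cellAt g b (Suc j mod (r + 2))"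
proof -
  assume j: "j < r + 2"
  define D where "D = nat (b - g)"
  have D: "int D = b - g" "D \<le> r" using gb by (auto simp: D_def)
  consider "j < D" | "j = D" | "D < j" "j < r + 1" | "j = r + 1" using j by linarith
  then show ?thesis
  proof cases
    case 1 then show ?thesis using D j
      by (simp add: bw_nth cellAt_def stp_def D_def[symmetric])
  next
    case 2 then show ?thesis using D j
      by (simp add: bw_nth cellAt_def stp_def D_def[symmetric])
  next
    case 3 then show ?thesis using D j
      by (simp add: bw_nth cellAt_def stp_def D_def[symmetric])
  next
    case 4 then show ?thesis using D j
      by (simp add: bw_nth cellAt_def stp_def D_def[symmetric])
  qed
qed

lemma lw_len: "length (lw r g b c) = r + 2"
  by (simp add: lw_def bw_len)

lemma lw_nth: "k < r + 2 \<Longrightarrow> lw r g b c ! k = bw r g b ! ((pos g b c + k) mod (r + 2))"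
  by (simp add: lw_def nth_rotate bw_len add.commute)

lemma lw_cnt: "cnt E (lw r g b c) = r" "cnt N (lw r g b c) = 2"
  using gb by (simp_all add: lw_def bw_def)

lemma lw_cells: "inl r g b c \<Longrightarrow> k \<le> r + 2 \<Longrightarrow>
   clf r c (lw r g b c) k = cellAt g b ((pos g b c + k) mod (r + 2))"
proof (induct k)
  case 0 then show ?case using cellAt_pos by simp
next
  case (Suc k)
  then have k: "k < r + 2" by simp
  have p: "pos g b c < r + 2" using cellAt_pos Suc by simp
  have "clf r c (lw r g b c) (Suc k) = mv r (clf r c (lw r g b c) k) (lw r g b c ! k)"
    using k by (simp add: clf_Suc lw_len)
  also have "\<dots> = mv r (cellAt g b ((pos g b c + k) mod (r + 2))) (bw r g b ! ((pos g b c + k) mod (r + 2)))"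
    using Suc k by (simp add: lw_nth)
  also have "\<dots> = cellAt g b (Suc ((pos g b c + k) mod (r + 2)) mod (r + 2))"
    by (simp add: mv_cellAt)
  also have "Suc ((pos g b c + k) mod (r + 2)) mod (r + 2) = (pos g b c + Suc k) mod (r + 2)"
    by (simp add: mod_Suc_eq)
  finally show ?case .
qed

lemma lw_closed: "inl r g b c \<Longrightarrow> clf r c (lw r g b c) (r + 2) = c"
proof -
  assume h: "inl r g b c"
  have p: "pos g b c < r + 2" "cellAt g b (pos g b c) = c" using cellAt_pos[OF h] by auto
  have "(pos g b c + (r + 2)) mod (r + 2) = pos g b c" using p(1) by (metis mod_add_self2 mod_less)
  then show ?thesis using lw_cells[OF h, of "r+2"] p by simp
qed

lemma stp_bw_pos: "inl r g b c \<Longrightarrow> stp r g b c = bw r g b ! pos g b c"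
  using bw_nth cellAt_pos by metis

lemma mv_stp: "inl r g b c \<Longrightarrow> mv r c (stp r g b c) = cellAt g b (Suc (pos g b c) mod (r + 2))"
  using mv_cellAt cellAt_pos stp_bw_pos by metis

lemma bw_N_cell: "j < r + 2 \<Longrightarrow> bw r g b ! j = N \<Longrightarrow>
   cellAt g b (Suc j mod (r + 2)) = (b, 1) \<or> cellAt g b (Suc j mod (r + 2)) = (g, 0)"
proof -
  assume j: "j < r + 2" and n: "bw r g b ! j = N"
  define D where "D = nat (b - g)"
  have D: "int D = b - g" "D \<le> r" using gb by (auto simp: D_def)
  consider "j < D" | "j = D" | "D < j" "j < r + 1" | "j = r + 1" using j by linarith
  then show ?thesis
  proof cases
    case 1 then show ?thesis using D j n
      by (simp add: bw_nth cellAt_def stp_def D_def[symmetric])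
  next
    case 2 then show ?thesis using D j
      by (simp add: bw_nth cellAt_def stp_def D_def[symmetric])
  next
    case 3 then show ?thesis using D j n
      by (simp add: bw_nth cellAt_def stp_def D_def[symmetric])
  next
    case 4 then show ?thesis using D j
      by (simp add: bw_nth cellAt_def stp_def D_def[symmetric])
  qed
qed

lemma bw_N_exists: "\<exists>j < r + 2. bw r g b ! j = N \<and> cellAt g b (Suc j mod (r + 2)) = (b, 1)"
      "\<exists>j < r + 2. bw r g b ! j = N \<and> cellAt g b (Suc j mod (r + 2)) = (g, 0)"
proof -
  define D where "D = nat (b - g)"
  have D: "int D = b - g" "D \<le> r" using gb by (auto simp: D_def)
  have "bw r g b ! D = N" using D by (simp add: bw_nth cellAt_def stp_def D_def[symmetric])
  moreover have "cellAt g b (Suc D mod (r + 2)) = (b, 1)" using D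
    by (simp add: cellAt_def D_def[symmetric])
  ultimately show "\<exists>j < r + 2. bw r g b ! j = N \<and> cellAt g b (Suc j mod (r + 2)) = (b, 1)"
    using D by (intro exI[of _ D]) auto
  have "bw r g b ! (r+1) = N" using D by (simp add: bw_nth cellAt_def stp_def D_def[symmetric])
  moreover have "cellAt g b (Suc (r+1) mod (r + 2)) = (g, 0)"
    by (simp add: cellAt_def)
  ultimately show "\<exists>j < r + 2. bw r g b ! j = N \<and> cellAt g b (Suc j mod (r + 2)) = (g, 0)"
    by (intro exI[of _ "r+1"]) auto
qed

end


definition ins :: "nat \<Rightarrow> step list \<Rightarrow> step list \<Rightarrow> step list" where
  "ins t w Q = take t Q @ w @ drop t Q"

lemma ins_len: "t \<le> length Q \<Longrightarrow> length (ins t w Q) = length Q + length w"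
  by (simp add: ins_def)

lemma ins_cnt: "cnt x (ins t w Q) = cnt x Q + cnt x w"
proof -
  have "cnt x Q = cnt x (take t Q) + cnt x (drop t Q)"
    by (metis append_take_drop_id cnt_append)
  then show ?thesis by (simp add: ins_def)
qed

lemma cl_split: "clf r c Q (t + k) = clf r (clf r c Q t) (drop t Q) k"
  by (simp add: clf_def take_add)

lemma ins_cl:
  assumes t: "t \<le> length Q" and closed: "clf r (clf r c Q t) w (length w) = clf r c Q t"
  shows "clf r c (ins t w Q) i =
     (if i \<le> t then clf r c Q i
      else if i \<le> t + length w then clf r (clf r c Q t) w (i - t)
      else clf r c Q (i - length w))"
proof (cases "i \<le> t")
  case True
  then have "take i (ins t w Q) = take i Q" using t by (simp add: ins_def min_absorb1)
  then show ?thesis using True by (simp add: clf_def)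
next
  case F: False
  show ?thesis
  proof (cases "i \<le> t + length w")
    case True
    then have "take i (ins t w Q) = take t Q @ take (i - t) w" using t F by (simp add: ins_def min_absorb2)
    then show ?thesis using True F by (simp add: clf_def)
  next
    case False
    then have tk: "take i (ins t w Q) = take t Q @ w @ take (i - t - length w) (drop t Q)"
      using t F by (simp add: ins_def min_absorb2)
    have cw: "foldl (mv r) (clf r c Q t) w = clf r c Q t" using closed by (simp add: clf_def)
    have "clf r c (ins t w Q) i = foldl (mv r) (clf r c Q t) (take (i - t - length w) (drop t Q))"
      using tk cw by (simp add: clf_def)
    also have "\<dots> = clf r c Q (t + (i - t - length w))" using cl_split[of r c Q t] by (simp add: clf_def)
    also have "t + (i - t - length w) = i - length w" using F False by simp
    finally show ?thesis using F False by simp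
  qed
qed

lemma ins_nth:
  assumes t: "t \<le> length Q" and i: "1 \<le> i" "i \<le> length Q + length w"
  shows "ins t w Q ! (i - 1) =
     (if i \<le> t then Q ! (i - 1) else if i \<le> t + length w then w ! (i - 1 - t) else Q ! (i - 1 - length w))"
proof -
  have lt: "length (take t Q) = t" using t by simp
  show ?thesis
  proof (cases "i \<le> t")
    case True
    then have "i - 1 < t" using i by simp
    then show ?thesis using True lt by (simp add: ins_def nth_append)
  next
    case F: False
    have ti: "\<not> i - 1 < t" using F i by simp
    have A: "ins t w Q ! (i - 1) = (w @ drop t Q) ! (i - 1 - t)"
      using ti lt unfolding ins_def by (simp add: nth_append)
    show ?thesis
    proof (cases "i \<le> t + length w")
      case True
      then have "i - 1 - t < length w" using F by simp
      then show ?thesis using A F True by (simp add: nth_append)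
    next
      case False
      then have "\<not> i - 1 - t < length w" by simp
      then have "(w @ drop t Q) ! (i - 1 - t) = drop t Q ! (i - 1 - t - length w)"
        by (simp add: nth_append)
      also have "\<dots> = Q ! (t + (i - 1 - t - length w))" using t i False by (simp add: nth_drop)
      also have "t + (i - 1 - t - length w) = i - 1 - length w" using F False by simp
      finally show ?thesis using A F False by simp
    qed
  qed
qed

lemma vl_remove:
  assumes v: "vl r (ins t w Q)" and t: "t \<le> length Q"
    and closed: "clf r (cl r Q t) w (length w) = cl r Q t"
  shows "vl r Q"
  unfolding vl_def
proof (intro allI impI)
  fix i j
  assume ij: "1 \<le> i" "i < j" "j \<le> length Q" "Q ! (i - 1) = E" "cl r Q j = cl r Q i"
  define f where "f k = (if k \<le> t then k else k + length w)" for k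
  have fi: "1 \<le> f i" "f i < f j" "f j \<le> length (ins t w Q)"
    using ij ins_len[OF t] by (auto simp: f_def)
  have nth: "ins t w Q ! (f k - 1) = Q ! (k - 1)" if "1 \<le> k" "k \<le> length Q" for k
  proof -
    have "1 \<le> f k" "f k \<le> length Q + length w" using that by (auto simp: f_def)
    from ins_nth[OF t this] show ?thesis using that by (auto simp: f_def)
  qed
  have clk: "cl r (ins t w Q) (f k) = cl r Q k" for k
    using ins_cl[OF t closed, of "f k"] by (auto simp: f_def)
  have a: "ins t w Q ! (f i - 1) = E" using nth[of i] ij by simp
  have b: "cl r (ins t w Q) (f j) = cl r (ins t w Q) (f i)" using clk ij by simp
  have "ins t w Q ! (f j - 1) = E"
    using v fi a b unfolding vl_def by blast
  then show "Q ! (j - 1) = E" using nth[of j] ij by simp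
qed

lemma vl_insert:
  assumes v: "vl r Q" and t: "t \<le> length Q"
    and closed: "clf r (cl r Q t) w (length w) = cl r Q t"
    and aN: "\<And>k i. 1 \<le> k \<Longrightarrow> k \<le> length w \<Longrightarrow> w ! (k - 1) = N \<Longrightarrow> 1 \<le> i \<Longrightarrow> i \<le> t \<Longrightarrow>
               cl r Q i = clf r (cl r Q t) w k \<Longrightarrow> Q ! (i - 1) = N"
    and bL: "\<And>k j. 1 \<le> k \<Longrightarrow> k \<le> length w \<Longrightarrow> t < j \<Longrightarrow> j \<le> length Q \<Longrightarrow>
               cl r Q j \<noteq> clf r (cl r Q t) w k"
    and cD: "\<And>k k'. 1 \<le> k \<Longrightarrow> k < k' \<Longrightarrow> k' \<le> length w \<Longrightarrow>
               clf r (cl r Q t) w k \<noteq> clf r (cl r Q t) w k'"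
  shows "vl r (ins t w Q)"
  unfolding vl_def
proof (intro allI impI)
  fix i j
  let ?P = "ins t w Q"
  let ?L = "length w"
  let ?c = "cl r Q t"
  assume ij: "1 \<le> i" "i < j" "j \<le> length ?P" "?P ! (i - 1) = E"
    "cl r ?P j = cl r ?P i"
  have len: "length ?P = length Q + ?L" using ins_len[OF t] .
  have jl: "j \<le> length Q + ?L" using ij len by simp
  have il: "i \<le> length Q + ?L" using ij len by simp
  have Ni: "?P ! (i - 1) = (if i \<le> t then Q ! (i - 1) else if i \<le> t + ?L then w ! (i - 1 - t) else Q ! (i - 1 - ?L))"
    using ins_nth[OF t ij(1) il] .
  have Nj: "?P ! (j - 1) = (if j \<le> t then Q ! (j - 1) else if j \<le> t + ?L then w ! (j - 1 - t) else Q ! (j - 1 - ?L))"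
    using ins_nth[OF t _ jl] ij by simp
  have Ci: "cl r ?P i = (if i \<le> t then cl r Q i else if i \<le> t + ?L then clf r ?c w (i - t) else cl r Q (i - ?L))"
    using ins_cl[OF t closed] .
  have Cj: "cl r ?P j = (if j \<le> t then cl r Q j else if j \<le> t + ?L then clf r ?c w (j - t) else cl r Q (j - ?L))"
    using ins_cl[OF t closed] .
  have vQ: "Q ! (j' - 1) = E" if "1 \<le> i'" "i' < j'" "j' \<le> length Q" "Q ! (i' - 1) = E" "cl r Q j' = cl r Q i'" for i' j'
    using v that unfolding vl_def by blast
  show "?P ! (j - 1) = E"
  proof (cases "j \<le> t")
    case jt: True
    then have it: "i \<le> t" using ij by simp
    show ?thesis using vQ[of i j] ij jt it Ni Nj Ci Cj t by simp
  next
    case jt: False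
    show ?thesis
    proof (cases "j \<le> t + ?L")
      case jL: True
      show ?thesis
      proof (cases "i \<le> t")
        case it: True
        show ?thesis
        proof (rule ccontr)
          assume "?P ! (j - 1) \<noteq> E"
          then have wN: "w ! (j - t - 1) = N" using Nj jt jL step_cases by (auto simp: diff_diff_add add.commute)
          have e1: "cl r Q i = clf r ?c w (j - t)" using Ci Cj it jt jL ij by simp
          have "Q ! (i - 1) = N"
            using aN[of "j - t" i] wN ij it jt jL e1 by simp
          then show False using ij it Ni by simp
        qed
      next
        case it: False
        have "clf r ?c w (i - t) \<noteq> clf r ?c w (j - t)"
          using cD[of "i - t" "j - t"] it jt jL ij by auto
        then show ?thesis using ij Ci Cj it jt jL by simp
      qed
    next
      case jL: False
      have Nj': "?P ! (j - 1) = Q ! (j - ?L - 1)" using Nj jt jL by (simp add: diff_diff_add add.commute)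
      have Cj': "cl r ?P j = cl r Q (j - ?L)" using Cj jt jL by simp
      have jQ: "j - ?L \<le> length Q" using jl by simp
      show ?thesis
      proof (cases "i \<le> t")
        case it: True
        have "Q ! (j - ?L - 1) = E"
          using vQ[of i "j - ?L"] ij it jt jL jQ Ni Ci Cj' by simp
        then show ?thesis using Nj' by simp
      next
        case it: False
        show ?thesis
        proof (cases "i \<le> t + ?L")
          case iL: True
          have "cl r Q (j - ?L) \<noteq> clf r ?c w (i - t)"
            using bL[of "i - t" "j - ?L"] ij it iL jt jL jQ by simp
          then show ?thesis using ij Ci Cj' it iL by simp
        next
          case iL: False
          have a: "1 \<le> i - ?L" "i - ?L < j - ?L" using ij iL it by auto
          have b: "Q ! (i - ?L - 1) = E" using Ni ij iL it by (simp add: diff_diff_add add.commute)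
          have c: "cl r Q (j - ?L) = cl r Q (i - ?L)" using Ci Cj' ij iL it by simp
          show ?thesis using vQ[OF a jQ b c] Nj' by simp
        qed
      qed
    qed
  qed
qed


definition LS :: "nat \<Rightarrow> step list \<Rightarrow> int \<Rightarrow> int set" where
  "LS r ps k = {p. \<exists>i. 1 \<le> i \<and> i \<le> length ps \<and> ps ! (i - 1) = N \<and> cl r ps i = (p, k)}"

lemma finite_LS: "finite (LS r ps k)"
proof -
  have "LS r ps k \<subseteq> (\<lambda>i. fst (cl r ps i)) ` {1..length ps}"
    unfolding LS_def by (force)
  then show ?thesis by (rule finite_subset) simp
qed

definition uu :: "nat \<Rightarrow> step list \<Rightarrow> int" where "uu r ps = Min (LS r ps 0)"
definition vv :: "nat \<Rightarrow> step list \<Rightarrow> int" where "vv r ps = Min (LS r ps 1)"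

lemma cl_step: "1 \<le> i \<Longrightarrow> i \<le> length ps \<Longrightarrow> cl r ps i = mv r (cl r ps (i - 1)) (ps ! (i - 1))"
  using clf_Suc[of "i - 1" ps r "(0,0)"] by simp

lemma erun: "(\<forall>j. i \<le> j \<longrightarrow> j < k \<longrightarrow> ps ! j = E) \<Longrightarrow> i \<le> k \<Longrightarrow> k \<le> length ps \<Longrightarrow>
   cl r ps k = (fst (cl r ps i) + int (k - i), snd (cl r ps i))"
proof (induct k)
  case 0 then show ?case by simp
next
  case (Suc k)
  show ?case
  proof (cases "i = Suc k")
    case True then show ?thesis by simp
  next
    case False
    then have ik: "i \<le> k" using Suc by simp
    have "cl r ps (Suc k) = mv r (cl r ps k) (ps ! k)" using Suc by (simp add: clf_Suc)
    also have "ps ! k = E" using Suc ik by simp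
    finally show ?thesis using Suc ik by (simp add: Suc_diff_le)
  qed
qed

lemma landing_pred1: "1 \<le> i \<Longrightarrow> i \<le> length ps \<Longrightarrow> ps ! (i - 1) = N \<Longrightarrow> cl r ps i = (p, 1) \<Longrightarrow>
   cl r ps (i - 1) = (p, 0)"
  using cl_step[of i ps r] row_cl[of r ps "i - 1"]
  by (cases "cl r ps (i - 1)") (auto split: if_splits)

lemma landing_pred0: "1 \<le> i \<Longrightarrow> i \<le> length ps \<Longrightarrow> ps ! (i - 1) = N \<Longrightarrow> cl r ps i = (p, 0) \<Longrightarrow>
   cl r ps (i - 1) = (p + int r, 1)"
  using cl_step[of i ps r] row_cl[of r ps "i - 1"]
  by (cases "cl r ps (i - 1)") (auto split: if_splits)

lemma e_pred: "1 \<le> i \<Longrightarrow> i \<le> length ps \<Longrightarrow> ps ! (i - 1) = E \<Longrightarrow> cl r ps i = (p, k) \<Longrightarrow>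
   cl r ps (i - 1) = (p - 1, k)"
  using cl_step[of i ps r] by (cases "cl r ps (i - 1)") auto

lemma vis_bound: "i \<le> length ps \<Longrightarrow>
   (snd (cl r ps i) = 0 \<longrightarrow> 0 \<le> fst (cl r ps i) \<or> (\<exists>q\<in>LS r ps 0. q \<le> fst (cl r ps i))) \<and>
   (snd (cl r ps i) = 1 \<longrightarrow> (\<exists>q\<in>LS r ps 1. q \<le> fst (cl r ps i)))"
proof (induct i)
  case 0 then show ?case by simp
next
  case (Suc i)
  then have i: "i < length ps" by simp
  have IH: "(snd (cl r ps i) = 0 \<longrightarrow> 0 \<le> fst (cl r ps i) \<or> (\<exists>q\<in>LS r ps 0. q \<le> fst (cl r ps i))) \<and>
   (snd (cl r ps i) = 1 \<longrightarrow> (\<exists>q\<in>LS r ps 1. q \<le> fst (cl r ps i)))" using Suc by simp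
  have st: "cl r ps (Suc i) = mv r (cl r ps i) (ps ! i)" using i by (simp add: clf_Suc)
  show ?case
  proof (cases "ps ! i")
    case E
    obtain x y where xy: "cl r ps i = (x, y)" by (cases "cl r ps i")
    have s2: "cl r ps (Suc i) = (x + 1, y)" using st E xy by simp
    have "\<exists>q\<in>LS r ps k. q \<le> x + 1" if "\<exists>q\<in>LS r ps k. q \<le> x" for k
    proof -
      from that obtain q where q: "q \<in> LS r ps k" "q \<le> x" by blast
      show ?thesis by (rule bexI[OF _ q(1)]) (use q(2) in linarith)
    qed
    then show ?thesis unfolding s2 using IH xy by auto
  next
    case N
    have mem: "fst (cl r ps (Suc i)) \<in> LS r ps (snd (cl r ps (Suc i)))"
      unfolding LS_def using i N by (intro CollectI exI[of _ "Suc i"]) auto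
    then show ?thesis by auto
  qed
qed

lemma exists_N: "cnt N ps \<ge> 1 \<Longrightarrow> \<exists>i < length ps. ps ! i = N"
proof -
  assume "cnt N ps \<ge> 1"
  then have "filter (\<lambda>y. y = N) ps \<noteq> []" unfolding cnt_def by auto
  then have "N \<in> set ps" by (simp add: filter_empty_conv)
  then show ?thesis by (simp add: in_set_conv_nth)
qed

lemma last_landing:
  assumes c: "cnt N ps \<ge> 1" and e: "cl r ps (length ps) = (0,0)"
  shows "\<exists>q\<in>LS r ps 0. q \<le> 0"
proof -
  let ?S = "{i. 1 \<le> i \<and> i \<le> length ps \<and> ps ! (i - 1) = N}"
  have ne: "?S \<noteq> {}"
  proof -
    obtain i where i: "i < length ps" "ps ! i = N" using exists_N[OF c] by blast
    then have "Suc i \<in> ?S" by simp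
    then show ?thesis by blast
  qed
  have fin: "finite ?S" by (rule finite_subset[of _ "{0..length ps}"]) auto
  define i0 where "i0 = Max ?S"
  have i0: "i0 \<in> ?S" using Max_in[OF fin ne] i0_def by simp
  have after: "\<forall>j. i0 \<le> j \<longrightarrow> j < length ps \<longrightarrow> ps ! j = E"
  proof (intro allI impI)
    fix j assume j: "i0 \<le> j" "j < length ps"
    show "ps ! j = E"
    proof (rule ccontr)
      assume "ps ! j \<noteq> E"
      then have "ps ! j = N" using step_cases by auto
      then have "Suc j \<in> ?S" using j by simp
      then have "Suc j \<le> i0" using Max_ge[OF fin] i0_def by simp
      then show False using j by simp
    qed
  qed
  have "cl r ps (length ps) = (fst (cl r ps i0) + int (length ps - i0), snd (cl r ps i0))"
    using erun[OF after] i0 by simp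
  then have h: "snd (cl r ps i0) = 0" "fst (cl r ps i0) \<le> 0" using e by auto
  have "fst (cl r ps i0) \<in> LS r ps 0"
    unfolding LS_def using i0 h by (intro CollectI exI[of _ i0]) (auto simp: prod_eq_iff)
  then show ?thesis using h by blast
qed

lemma first_landing:
  assumes c: "cnt N ps \<ge> 1"
  shows "LS r ps 1 \<noteq> {}"
proof -
  let ?S = "{i. i < length ps \<and> ps ! i = N}"
  have ne: "?S \<noteq> {}" using exists_N[OF c] by auto
  define i1 where "i1 = Min ?S"
  have fin: "finite ?S" by simp
  have i1: "i1 \<in> ?S" using Min_in[OF fin ne] i1_def by simp
  have before: "\<forall>j. 0 \<le> j \<longrightarrow> j < i1 \<longrightarrow> ps ! j = E"
  proof (intro allI impI)
    fix j assume j: "0 \<le> j" "j < i1"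
    show "ps ! j = E"
    proof (rule ccontr)
      assume "ps ! j \<noteq> E"
      then have "j \<in> ?S" using j i1 step_cases by auto
      then have "i1 \<le> j" using Min_le[OF fin] i1_def by simp
      then show False using j by simp
    qed
  qed
  have "cl r ps i1 = (int i1, 0)" using erun[OF before, of r] i1 by simp
  then have "cl r ps (Suc i1) = (int i1, 1)" using i1 by (simp add: clf_Suc)
  then have "int i1 \<in> LS r ps 1"
    unfolding LS_def using i1 by (intro CollectI exI[of _ "Suc i1"]) auto
  then show ?thesis by auto
qed

definition good :: "nat \<Rightarrow> step list \<Rightarrow> bool" where
  "good r ps \<longleftrightarrow> cl r ps (length ps) = (0,0) \<and> cnt N ps \<ge> 1"

context
  fixes r :: nat and ps :: "step list"
  assumes gd: "good r ps"
begin

lemma LS0_ne: "LS r ps 0 \<noteq> {}" using last_landing gd unfolding good_def by blast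
lemma LS1_ne: "LS r ps 1 \<noteq> {}" using first_landing gd unfolding good_def by blast

lemma uu_mem: "uu r ps \<in> LS r ps 0" unfolding uu_def using Min_in[OF finite_LS LS0_ne] .
lemma vv_mem: "vv r ps \<in> LS r ps 1" unfolding vv_def using Min_in[OF finite_LS LS1_ne] .
lemma uu_le: "q \<in> LS r ps 0 \<Longrightarrow> uu r ps \<le> q" unfolding uu_def using Min_le[OF finite_LS] .
lemma vv_le: "q \<in> LS r ps 1 \<Longrightarrow> vv r ps \<le> q" unfolding vv_def using Min_le[OF finite_LS] .

lemma uu_le0: "uu r ps \<le> 0"
  using last_landing gd uu_le unfolding good_def by fastforce

lemma vis0: "i \<le> length ps \<Longrightarrow> cl r ps i = (p, 0) \<Longrightarrow> uu r ps \<le> p"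
  using vis_bound[of i ps r] uu_le uu_le0 by fastforce

lemma vis1: "i \<le> length ps \<Longrightarrow> cl r ps i = (p, 1) \<Longrightarrow> vv r ps \<le> p"
  using vis_bound[of i ps r] vv_le by fastforce

lemma LS_witness: "q \<in> LS r ps k \<Longrightarrow> \<exists>i. 1 \<le> i \<and> i \<le> length ps \<and> ps ! (i - 1) = N \<and> cl r ps i = (q, k)"
  unfolding LS_def by simp

lemma uu_vv: "uu r ps \<le> vv r ps" "vv r ps \<le> uu r ps + int r"
proof -
  obtain i where i: "1 \<le> i" "i \<le> length ps" "ps ! (i - 1) = N" "cl r ps i = (vv r ps, 1)"
    using LS_witness[OF vv_mem] by blast
  have "cl r ps (i - 1) = (vv r ps, 0)" using landing_pred1[OF i] .
  then show "uu r ps \<le> vv r ps" using vis0[of "i - 1"] i by simp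
  obtain j where j: "1 \<le> j" "j \<le> length ps" "ps ! (j - 1) = N" "cl r ps j = (uu r ps, 0)"
    using LS_witness[OF uu_mem] by blast
  have "cl r ps (j - 1) = (uu r ps + int r, 1)" using landing_pred0[OF j] .
  then show "vv r ps \<le> uu r ps + int r" using vis1[of "j - 1"] j by simp
qed

end


definition VV :: "nat \<Rightarrow> nat \<Rightarrow> step list set" where
  "VV r m = {ps. cnt E ps = m * r \<and> cnt N ps = 2 * m \<and> vl r ps}"

lemma VV_valid_paths: "r > 0 \<Longrightarrow> valid_paths r 2 (int (m * r), int (2 * m)) = VV r m"
proof -
  assume r: "r > 0"
  have e: "pt ps (length ps) = (int (m * r), int (2 * m)) \<longleftrightarrow> cnt E ps = m * r \<and> cnt N ps = 2 * m" for ps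
    by (simp only: pt_len prod.inject of_nat_eq_iff)
  show ?thesis unfolding valid_paths_def VV_def using e valid_vl[OF r] by auto
qed

lemma VV_good: "ps \<in> VV r m \<Longrightarrow> m \<ge> 1 \<Longrightarrow> good r ps"
proof -
  assume p: "ps \<in> VV r m" and m: "m \<ge> 1"
  have "cl r ps (length ps) = cell r (pt ps (length ps))" using cell_pt by simp
  also have "\<dots> = (0,0)" using p by (simp add: VV_def pt_len cell_def)
  finally show ?thesis using p m by (simp add: good_def VV_def)
qed

definition AA :: "nat \<Rightarrow> step list \<Rightarrow> (int \<times> int) set" where
  "AA r Q = {(g,b). g \<le> uu r Q \<and> b \<le> vv r Q \<and> g \<le> b \<and> b \<le> g + int r \<and>
                    (\<exists>i \<le> length Q. inl r g b (cl r Q i))}"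

definition lv :: "nat \<Rightarrow> step list \<Rightarrow> int \<Rightarrow> int \<Rightarrow> nat" where
  "lv r P g b = Max {i. i \<le> length P \<and> inl r g b (cl r P i)}"

definition Psi :: "nat \<Rightarrow> step list \<Rightarrow> int \<times> int \<Rightarrow> step list" where
  "Psi r Q gb = (case gb of (g,b) \<Rightarrow> ins (lv r Q g b) (lw r g b (cl r Q (lv r Q g b))) Q)"

lemma lv_props:
  assumes "\<exists>i \<le> length P. inl r g b (cl r P i)"
  shows "lv r P g b \<le> length P" "inl r g b (cl r P (lv r P g b))"
    "\<And>j. j \<le> length P \<Longrightarrow> inl r g b (cl r P j) \<Longrightarrow> j \<le> lv r P g b"
proof -
  let ?S = "{i. i \<le> length P \<and> inl r g b (cl r P i)}"
  have fin: "finite ?S" by (rule finite_subset[of _ "{0..length P}"]) auto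
  have ne: "?S \<noteq> {}" using assms by auto
  have "lv r P g b \<in> ?S" unfolding lv_def using Max_in[OF fin ne] .
  then show "lv r P g b \<le> length P" "inl r g b (cl r P (lv r P g b))" by auto
  show "\<And>j. j \<le> length P \<Longrightarrow> inl r g b (cl r P j) \<Longrightarrow> j \<le> lv r P g b"
    unfolding lv_def using Max_ge[OF fin] by auto
qed

lemma lv_unique:
  assumes "t \<le> length P" "inl r g b (cl r P t)"
    "\<And>j. j \<le> length P \<Longrightarrow> t < j \<Longrightarrow> \<not> inl r g b (cl r P j)"
  shows "lv r P g b = t"
proof -
  have ex: "\<exists>i \<le> length P. inl r g b (cl r P i)" using assms by blast
  have "t \<le> lv r P g b" using lv_props(3)[OF ex assms(1,2)] .
  moreover have "\<not> t < lv r P g b"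
  proof
    assume "t < lv r P g b"
    then have "\<not> inl r g b (cl r P (lv r P g b))" using assms(3)[OF lv_props(1)[OF ex]] by blast
    then show False using lv_props(2)[OF ex] by blast
  qed
  ultimately show ?thesis by simp
qed

lemma find_k: "(p::nat) < L \<Longrightarrow> j < L \<Longrightarrow> \<exists>k. 1 \<le> k \<and> k \<le> L \<and> (p + k - 1) mod L = j"
proof -
  assume p: "p < L" and j: "j < L"
  show ?thesis
  proof (cases "p \<le> j")
    case True
    then have "p + (j - p + 1) - 1 = j" by linarith
    then show ?thesis using j True by (intro exI[of _ "j - p + 1"]) auto
  next
    case False
    have "(p + (L - p + j + 1) - 1) mod L = (L + j) mod L" using p by (simp add: algebra_simps)
    also have "\<dots> = j" using j by simp
    finally show ?thesis using False p by (intro exI[of _ "L - p + j + 1"]) auto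
  qed
qed

lemma mod_Suc_pred: "1 \<le> (k::nat) \<Longrightarrow> Suc ((p + k - 1) mod L) mod L = (p + k) mod L"
  by (metis Suc_diff_le add_diff_cancel_left' le_add2 le_trans mod_Suc_eq plus_1_eq_Suc)

context
  fixes r :: nat and g b :: int
  assumes gb: "g \<le> b" "b \<le> g + int r"
begin

lemma loop_entry:
  assumes c: "inl r g b c" and k: "1 \<le> k" "k \<le> r + 2"
  shows "lw r g b c ! (k - 1) = bw r g b ! ((pos g b c + k - 1) mod (r + 2))"
        "clf r c (lw r g b c) k = cellAt g b ((pos g b c + k) mod (r + 2))"
        "lw r g b c ! (k - 1) = N \<Longrightarrow> clf r c (lw r g b c) k = (b, 1) \<or> clf r c (lw r g b c) k = (g, 0)"
        "inl r g b (clf r c (lw r g b c) k)"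
proof -
  have p: "pos g b c < r + 2" using cellAt_pos[OF gb c] by simp
  show 1: "lw r g b c ! (k - 1) = bw r g b ! ((pos g b c + k - 1) mod (r + 2))"
    using lw_nth[OF gb, of "k - 1" c] k by simp
  show 2: "clf r c (lw r g b c) k = cellAt g b ((pos g b c + k) mod (r + 2))"
    using lw_cells[OF gb c k(2)] .
  show "lw r g b c ! (k - 1) = N \<Longrightarrow> clf r c (lw r g b c) k = (b, 1) \<or> clf r c (lw r g b c) k = (g, 0)"
  proof -
    assume n: "lw r g b c ! (k - 1) = N"
    have "cellAt g b (Suc ((pos g b c + k - 1) mod (r + 2)) mod (r + 2)) = (b, 1) \<or>
          cellAt g b (Suc ((pos g b c + k - 1) mod (r + 2)) mod (r + 2)) = (g, 0)"
      using bw_N_cell[OF gb, of "(pos g b c + k - 1) mod (r + 2)"] n 1 by simp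
    then show ?thesis using 2 mod_Suc_pred[OF k(1)] by simp
  qed
  show "inl r g b (clf r c (lw r g b c) k)" using 2 cellAt_inl[OF gb] by simp
qed

lemma loop_has_landings:
  assumes c: "inl r g b c"
  shows "\<exists>k. 1 \<le> k \<and> k \<le> r + 2 \<and> lw r g b c ! (k - 1) = N \<and> clf r c (lw r g b c) k = (b, 1)"
        "\<exists>k. 1 \<le> k \<and> k \<le> r + 2 \<and> lw r g b c ! (k - 1) = N \<and> clf r c (lw r g b c) k = (g, 0)"
proof -
  have p: "pos g b c < r + 2" using cellAt_pos[OF gb c] by simp
  obtain j where j: "j < r + 2" "bw r g b ! j = N" "cellAt g b (Suc j mod (r + 2)) = (b, 1)"
    using bw_N_exists(1)[OF gb] by blast
  obtain k where k: "1 \<le> k" "k \<le> r + 2" "(pos g b c + k - 1) mod (r + 2) = j"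
    using find_k[OF p j(1)] by blast
  show "\<exists>k. 1 \<le> k \<and> k \<le> r + 2 \<and> lw r g b c ! (k - 1) = N \<and> clf r c (lw r g b c) k = (b, 1)"
    using loop_entry[OF c k(1,2)] j k mod_Suc_pred[OF k(1), of "pos g b c" "r+2"]
    by (intro exI[of _ k]) auto
  obtain j' where j': "j' < r + 2" "bw r g b ! j' = N" "cellAt g b (Suc j' mod (r + 2)) = (g, 0)"
    using bw_N_exists(2)[OF gb] by blast
  obtain k' where k': "1 \<le> k'" "k' \<le> r + 2" "(pos g b c + k' - 1) mod (r + 2) = j'"
    using find_k[OF p j'(1)] by blast
  show "\<exists>k. 1 \<le> k \<and> k \<le> r + 2 \<and> lw r g b c ! (k - 1) = N \<and> clf r c (lw r g b c) k = (g, 0)"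
    using loop_entry[OF c k'(1,2)] j' k' mod_Suc_pred[OF k'(1), of "pos g b c" "r+2"]
    by (intro exI[of _ k']) auto
qed

lemma loop_distinct:
  assumes c: "inl r g b c" and k: "1 \<le> k" "k < k'" "k' \<le> r + 2"
  shows "clf r c (lw r g b c) k \<noteq> clf r c (lw r g b c) k'"
proof
  assume h: "clf r c (lw r g b c) k = clf r c (lw r g b c) k'"
  let ?p = "pos g b c"
  have "cellAt g b ((?p + k) mod (r + 2)) = cellAt g b ((?p + k') mod (r + 2))"
    using h loop_entry(2)[OF c] k by simp
  then have e: "(?p + k) mod (r + 2) = (?p + k') mod (r + 2)"
    using cellAt_inj[OF gb] by simp
  have le: "?p + k \<le> ?p + k'" using k by simp
  have "(r + 2) dvd ((?p + k') - (?p + k))" using e mod_eq_dvd_iff_nat[OF le, of "r+2"] by simp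
  then have "(r + 2) dvd (k' - k)" by simp
  moreover have "0 < k' - k" "k' - k < r + 2" using k by auto
  ultimately show False using nat_dvd_not_less by blast
qed

end


definition Phi :: "nat \<Rightarrow> step list \<Rightarrow> step list \<times> (int \<times> int)" where
  "Phi r P = (let g = uu r P; b = vv r P; s = lv r P g b in (take (s - (r + 2)) P @ drop s P, (g, b)))"

context
  fixes r :: nat and Q :: "step list" and g b :: int
  assumes vQ: "vl r Q" and gQ: "good r Q" and adm: "(g, b) \<in> AA r Q"
begin

lemma adm_facts: "g \<le> uu r Q" "b \<le> vv r Q" "g \<le> b" "b \<le> g + int r"
   "\<exists>i \<le> length Q. inl r g b (cl r Q i)"
  using adm by (auto simp: AA_def)

abbreviation "tt \<equiv> lv r Q g b"
abbreviation "cc \<equiv> cl r Q tt"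
abbreviation "ww \<equiv> lw r g b cc"

lemma t_props: "tt \<le> length Q" "inl r g b cc" "\<And>j. j \<le> length Q \<Longrightarrow> tt < j \<Longrightarrow> \<not> inl r g b (cl r Q j)"
  using lv_props(1,2)[OF adm_facts(5)] apply auto[2]
  using lv_props(3)[OF adm_facts(5)] by (meson leD)

lemma ww_len: "length ww = r + 2" using lw_len[OF adm_facts(3,4)] .

lemma closed: "clf r cc ww (length ww) = cc"
  using lw_closed[OF adm_facts(3,4) t_props(2)] ww_len by simp

lemma Psi_eq: "Psi r Q (g, b) = ins tt ww Q" by (simp add: Psi_def)

lemma Psi_vl: "vl r (Psi r Q (g, b))"
  unfolding Psi_eq
proof (rule vl_insert[OF vQ t_props(1) closed])
  fix k i
  assume k: "1 \<le> k" "k \<le> length ww" "ww ! (k - 1) = N" and i: "1 \<le> i" "i \<le> tt"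
    and e: "cl r Q i = clf r cc ww k"
  have k2: "k \<le> r + 2" using k ww_len by simp
  have cases: "clf r cc ww k = (b, 1) \<or> clf r cc ww k = (g, 0)"
    using loop_entry(3)[OF adm_facts(3,4) t_props(2) k(1) k2 k(3)] .
  show "Q ! (i - 1) = N"
  proof (rule ccontr)
    assume "Q ! (i - 1) \<noteq> N"
    then have QE: "Q ! (i - 1) = E" using step_cases by auto
    have iQ: "i \<le> length Q" using i t_props(1) by simp
    from cases show False
    proof
      assume "clf r cc ww k = (b, 1)"
      then have "cl r Q (i - 1) = (b - 1, 1)" using e_pred[OF i(1) iQ QE] e by simp
      then have "vv r Q \<le> b - 1" using vis1[OF gQ, of "i - 1" "b - 1"] iQ by simp
      then show False using adm_facts(2) by simp
    next
      assume "clf r cc ww k = (g, 0)"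
      then have "cl r Q (i - 1) = (g - 1, 0)" using e_pred[OF i(1) iQ QE] e by simp
      then have "uu r Q \<le> g - 1" using vis0[OF gQ, of "i - 1" "g - 1"] iQ by simp
      then show False using adm_facts(1) by simp
    qed
  qed
next
  fix k j
  assume k: "1 \<le> k" "k \<le> length ww" and j: "tt < j" "j \<le> length Q"
  have "inl r g b (clf r cc ww k)" using loop_entry(4)[OF adm_facts(3,4) t_props(2) k(1)] k ww_len by simp
  then show "cl r Q j \<noteq> clf r cc ww k" using t_props(3)[OF j(2,1)] by auto
next
  fix k k'
  assume "1 \<le> k" "k < k'" "k' \<le> length ww"
  then show "clf r cc ww k \<noteq> clf r cc ww k'"
    using loop_distinct[OF adm_facts(3,4) t_props(2)] ww_len by simp
qed

lemma Psi_cnt: "cnt E (Psi r Q (g, b)) = cnt E Q + r" "cnt N (Psi r Q (g, b)) = cnt N Q + 2"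
  unfolding Psi_eq ins_cnt using lw_cnt[OF adm_facts(3,4)] by auto

lemma Psi_len: "length (Psi r Q (g, b)) = length Q + (r + 2)"
  unfolding Psi_eq using ins_len[OF t_props(1)] ww_len by simp

lemma Psi_cl: "cl r (Psi r Q (g, b)) i = (if i \<le> tt then cl r Q i else if i \<le> tt + (r + 2) then clf r cc ww (i - tt)
      else cl r Q (i - (r + 2)))"
  unfolding Psi_eq using ins_cl[OF t_props(1) closed] ww_len by simp

lemma Psi_nth: "1 \<le> i \<Longrightarrow> i \<le> length Q + (r + 2) \<Longrightarrow> Psi r Q (g, b) ! (i - 1) =
     (if i \<le> tt then Q ! (i - 1) else if i \<le> tt + (r + 2) then ww ! (i - 1 - tt) else Q ! (i - 1 - (r + 2)))"
  unfolding Psi_eq using ins_nth[OF t_props(1), of i ww] ww_len by simp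

lemma Psi_take: "take tt (Psi r Q (g, b)) = take tt Q"
  unfolding Psi_eq ins_def using t_props(1) by simp

lemma t_after_N: "\<exists>i. 1 \<le> i \<and> i \<le> tt \<and> Q ! (i - 1) = N"
proof -
  obtain i where i: "i \<le> length Q" "inl r g b (cl r Q i)" using adm_facts(5) by blast
  have "snd (cl r Q i) = 0 \<or> snd (cl r Q i) = 1" using row_cl by blast
  then show ?thesis
  proof
    assume s0: "snd (cl r Q i) = 0"
    then have "uu r Q \<le> fst (cl r Q i)" "fst (cl r Q i) \<le> b"
      using vis0[OF gQ i(1), of "fst (cl r Q i)"] i(2) by (auto simp: inl_def prod_eq_iff)
    obtain j where j: "1 \<le> j" "j \<le> length Q" "Q ! (j - 1) = N" "cl r Q j = (uu r Q, 0)"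
      using LS_witness[OF gQ uu_mem[OF gQ]] by blast
    have "inl r g b (cl r Q j)" using j adm_facts \<open>uu r Q \<le> fst (cl r Q i)\<close> \<open>fst (cl r Q i) \<le> b\<close>
      by (simp add: inl_def)
    then have "j \<le> tt" using t_props(3)[OF j(2)] by force
    then show ?thesis using j by blast
  next
    assume s1: "snd (cl r Q i) = 1"
    then have "vv r Q \<le> fst (cl r Q i)" "fst (cl r Q i) \<le> g + int r"
      using vis1[OF gQ i(1), of "fst (cl r Q i)"] i(2) by (auto simp: inl_def prod_eq_iff)
    obtain j where j: "1 \<le> j" "j \<le> length Q" "Q ! (j - 1) = N" "cl r Q j = (vv r Q, 1)"
      using LS_witness[OF gQ vv_mem[OF gQ]] by blast
    have "inl r g b (cl r Q j)" using j adm_facts \<open>vv r Q \<le> fst (cl r Q i)\<close> \<open>fst (cl r Q i) \<le> g + int r\<close>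
      by (simp add: inl_def)
    then have "j \<le> tt" using t_props(3)[OF j(2)] by force
    then show ?thesis using j by blast
  qed
qed

lemma Psi_LS:
  "g \<in> LS r (Psi r Q (g, b)) 0" "b \<in> LS r (Psi r Q (g, b)) 1"
  "\<And>q. q \<in> LS r (Psi r Q (g, b)) 0 \<Longrightarrow> g \<le> q"
  "\<And>q. q \<in> LS r (Psi r Q (g, b)) 1 \<Longrightarrow> b \<le> q"
proof -
  let ?P = "Psi r Q (g, b)"
  have lenP: "length ?P = length Q + (r + 2)" by (rule Psi_len)
  have loopland: "ww ! (k - 1) = N \<and> clf r cc ww k = (q, kk) \<Longrightarrow> 1 \<le> k \<Longrightarrow> k \<le> r + 2 \<Longrightarrow> q \<in> LS r ?P kk" for k q kk
  proof -
    assume h: "ww ! (k - 1) = N \<and> clf r cc ww k = (q, kk)" and k: "1 \<le> k" "k \<le> r + 2"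
    have i: "1 \<le> tt + k" "tt + k \<le> length ?P" using k t_props(1) lenP by auto
    have "?P ! (tt + k - 1) = ww ! (k - 1)" using Psi_nth[of "tt + k"] i lenP k by simp
    moreover have "cl r ?P (tt + k) = clf r cc ww k" using Psi_cl[of "tt + k"] k by simp
    ultimately show ?thesis unfolding LS_def using h i by (intro CollectI exI[of _ "tt + k"]) auto
  qed
  show "g \<in> LS r ?P 0"
    using loop_has_landings(2)[OF adm_facts(3,4) t_props(2)] loopland by blast
  show "b \<in> LS r ?P 1"
    using loop_has_landings(1)[OF adm_facts(3,4) t_props(2)] loopland by blast
  have gen: "q \<in> LS r ?P kk \<Longrightarrow> q \<in> LS r Q kk \<or> (q, kk) = (b, 1) \<or> (q, kk) = (g, 0)" for q kk
  proof -
    assume "q \<in> LS r ?P kk"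
    then obtain i where i: "1 \<le> i" "i \<le> length ?P" "?P ! (i - 1) = N" "cl r ?P i = (q, kk)"
      unfolding LS_def by blast
    have nth: "?P ! (i - 1) = (if i \<le> tt then Q ! (i - 1) else if i \<le> tt + (r + 2) then ww ! (i - 1 - tt) else Q ! (i - 1 - (r + 2)))"
      using Psi_nth[of i] i lenP by simp
    have clP: "cl r ?P i = (if i \<le> tt then cl r Q i else if i \<le> tt + (r + 2) then clf r cc ww (i - tt)
      else cl r Q (i - (r + 2)))" by (rule Psi_cl)
    show ?thesis
    proof (cases "i \<le> tt")
      case True
      then have "q \<in> LS r Q kk" unfolding LS_def using i nth clP t_props(1)
        by (intro CollectI exI[of _ i]) auto
      then show ?thesis by simp
    next
      case F: False
      show ?thesis
      proof (cases "i \<le> tt + (r + 2)")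
        case True
        have k: "1 \<le> i - tt" "i - tt \<le> r + 2" using F True by auto
        have wN: "ww ! (i - tt - 1) = N" using nth i F True by (simp add: diff_diff_add add.commute)
        have "clf r cc ww (i - tt) = (b, 1) \<or> clf r cc ww (i - tt) = (g, 0)"
          using loop_entry(3)[OF adm_facts(3,4) t_props(2) k] wN by simp
        then show ?thesis using clP i F True by simp
      next
        case False
        have "q \<in> LS r Q kk" unfolding LS_def
        proof (intro CollectI exI[of _ "i - (r + 2)"] conjI)
          show "1 \<le> i - (r + 2)" using F False by simp
          show "i - (r + 2) \<le> length Q" using i lenP by simp
          show "Q ! (i - (r + 2) - 1) = N" using nth i F False by (simp add: diff_diff_add add.commute)
          show "cl r Q (i - (r + 2)) = (q, kk)" using clP i F False by simp
        qed
        then show ?thesis by simp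
      qed
    qed
  qed
  show "\<And>q. q \<in> LS r ?P 0 \<Longrightarrow> g \<le> q"
  proof -
    fix q assume "q \<in> LS r ?P 0"
    then have "q \<in> LS r Q 0 \<or> q = g" using gen[of q 0] by auto
    then show "g \<le> q" using uu_le[OF gQ] adm_facts(1) by fastforce
  qed
  show "\<And>q. q \<in> LS r ?P 1 \<Longrightarrow> b \<le> q"
  proof -
    fix q assume "q \<in> LS r ?P 1"
    then have "q \<in> LS r Q 1 \<or> q = b" using gen[of q 1] by auto
    then show "b \<le> q" using vv_le[OF gQ] adm_facts(2) by fastforce
  qed
qed

lemma Psi_uv: "uu r (Psi r Q (g, b)) = g" "vv r (Psi r Q (g, b)) = b"
  unfolding uu_def vv_def using Psi_LS by (auto intro!: Min_eqI finite_LS)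

lemma Psi_lv: "lv r (Psi r Q (g, b)) g b = tt + (r + 2)"
proof (rule lv_unique)
  let ?P = "Psi r Q (g, b)"
  show "tt + (r + 2) \<le> length ?P" using Psi_len t_props(1) by simp
  show "inl r g b (cl r ?P (tt + (r + 2)))"
    using Psi_cl[of "tt + (r + 2)"] closed ww_len t_props(2) by simp
  fix j assume j: "j \<le> length ?P" "tt + (r + 2) < j"
  then have "cl r ?P j = cl r Q (j - (r + 2))" using Psi_cl[of j] by simp
  moreover have "\<not> inl r g b (cl r Q (j - (r + 2)))" using t_props(3) j Psi_len by simp
  ultimately show "\<not> inl r g b (cl r ?P j)" by simp
qed

lemma Psi_rem: "take (tt + (r + 2) - (r + 2)) (Psi r Q (g, b)) @ drop (tt + (r + 2)) (Psi r Q (g, b)) = Q"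
  unfolding Psi_eq ins_def using t_props(1) ww_len by simp

lemma Phi_Psi: "good r (Psi r Q (g, b)) \<Longrightarrow> Phi r (Psi r Q (g, b)) = (Q, (g, b))"
  unfolding Phi_def Let_def Psi_uv Psi_lv using Psi_rem by simp

end


locale PP =
  fixes r :: nat and P :: "step list"
  assumes vP: "vl r P" and gP: "good r P"
begin

abbreviation "gg \<equiv> uu r P"
abbreviation "bb \<equiv> vv r P"
abbreviation "len \<equiv> length P"
abbreviation "c \<equiv> cl r P"

lemma gb: "gg \<le> bb" "bb \<le> gg + int r" using uu_vv[OF gP] by auto

lemma endc: "c len = (0,0)" using gP by (simp add: good_def)

lemma len_pos: "0 < len" using gP unfolding good_def using cnt_EN[of P] by linarith

lemma stepc: "i < len \<Longrightarrow> c (Suc i) = mv r (c i) (P ! i)" by (simp add: clf_Suc)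

lemma forced0: "i < len \<Longrightarrow> c i = (p, 0) \<Longrightarrow> p < bb \<Longrightarrow> P ! i = E"
proof (rule ccontr)
  assume i: "i < len" "c i = (p, 0)" "p < bb" "P ! i \<noteq> E"
  then have N: "P ! i = N" using step_cases by auto
  then have "c (Suc i) = (p, 1)" using stepc[OF i(1)] i by simp
  then have "p \<in> LS r P 1" unfolding LS_def using i N by (intro CollectI exI[of _ "Suc i"]) auto
  then show False using vv_le[OF gP] i by fastforce
qed

lemma forced1: "i < len \<Longrightarrow> c i = (p, 1) \<Longrightarrow> p < gg + int r \<Longrightarrow> P ! i = E"
proof (rule ccontr)
  assume i: "i < len" "c i = (p, 1)" "p < gg + int r" "P ! i \<noteq> E"
  then have N: "P ! i = N" using step_cases by auto
  then have "c (Suc i) = (p - int r, 0)" using stepc[OF i(1)] i by simp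
  then have "p - int r \<in> LS r P 0" unfolding LS_def using i N by (intro CollectI exI[of _ "Suc i"]) auto
  then show False using uu_le[OF gP] i by fastforce
qed

lemma row1_lt: "c i = (p, 1) \<Longrightarrow> i \<le> len \<Longrightarrow> i < len"
  using endc by (cases "i = len") auto

lemma run0: "c i = (p, 0) \<Longrightarrow> p + int k \<le> bb \<Longrightarrow> i + k \<le> len \<Longrightarrow>
   c (i + k) = (p + int k, 0) \<and> (0 < k \<longrightarrow> P ! (i + k - 1) = E)"
proof (induct k)
  case 0 then show ?case by simp
next
  case (Suc k)
  have IH: "c (i + k) = (p + int k, 0)" using Suc by simp
  have lt: "i + k < len" using Suc by simp
  have E: "P ! (i + k) = E" using forced0[OF lt IH] Suc by simp
  have "c (Suc (i + k)) = (p + int k + 1, 0)" using stepc[OF lt] IH E by simp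
  then show ?case using E by simp
qed

lemma run0_end: "c i = (p, 0) \<Longrightarrow> i \<le> len \<Longrightarrow> p + int k \<le> bb \<Longrightarrow> len < i + k \<Longrightarrow> p + int (len - i) = 0"
proof -
  assume h: "c i = (p, 0)" "i \<le> len" "p + int k \<le> bb" "len < i + k"
  have "c (i + (len - i)) = (p + int (len - i), 0)"
    using run0[OF h(1), of "len - i"] h by simp
  then show ?thesis using endc h(2) by simp
qed

lemma run1: "c i = (p, 1) \<Longrightarrow> i \<le> len \<Longrightarrow> p + int k \<le> gg + int r \<Longrightarrow>
   i + k < len \<and> c (i + k) = (p + int k, 1) \<and> (0 < k \<longrightarrow> P ! (i + k - 1) = E)"
proof (induct k)
  case 0 then show ?case using row1_lt by simp
next
  case (Suc k)
  have IH: "c (i + k) = (p + int k, 1)" "i + k < len" using Suc by auto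
  have E: "P ! (i + k) = E" using forced1[OF IH(2) IH(1)] Suc by simp
  have c2: "c (Suc (i + k)) = (p + int k + 1, 1)" using stepc[OF IH(2)] IH E by simp
  then have "Suc (i + k) < len" using row1_lt[OF c2] IH by simp
  then show ?case using E c2 by simp
qed

lemma H0: "t < len \<Longrightarrow> c t = (bb, 0) \<Longrightarrow> inl r gg bb (c (Suc t)) \<Longrightarrow> c (Suc t) = (bb, 1)"
  using stepc[of t] step_cases[of "P ! t"] by (auto simp: inl_def)

lemma H1: "t < len \<Longrightarrow> c t = (gg + int r, 1) \<Longrightarrow> inl r gg bb (c (Suc t)) \<Longrightarrow> c (Suc t) = (gg, 0)"
  using stepc[of t] step_cases[of "P ! t"] by (auto simp: inl_def)

lemma step_in: "j < len \<Longrightarrow> inl r gg bb (c j) \<Longrightarrow> inl r gg bb (c (Suc j)) \<Longrightarrow> P ! j = stp r gg bb (c j)"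
proof -
  assume j: "j < len" "inl r gg bb (c j)" "inl r gg bb (c (Suc j))"
  obtain x y where xy: "c j = (x, y)" by (cases "c j")
  have y: "y = 0 \<or> y = 1" using row_cl[of r P j] xy by simp
  show ?thesis
  proof (cases "y = 0")
    case True
    show ?thesis
    proof (cases "x < bb")
      case True
      then show ?thesis using forced0[OF j(1)] xy \<open>y = 0\<close> by (simp add: stp_def)
    next
      case False
      then have "x = bb" using j(2) xy \<open>y = 0\<close> by (simp add: inl_def)
      then have "P ! j = N" using j stepc[OF j(1)] xy \<open>y = 0\<close> step_cases[of "P ! j"] by (auto simp: inl_def)
      then show ?thesis using False xy \<open>y = 0\<close> by (simp add: stp_def)
    qed
  next
    case False
    then have y1: "y = 1" using y by simp
    show ?thesis
    proof (cases "x < gg + int r")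
      case True
      then show ?thesis using forced1[OF j(1)] xy y1 by (simp add: stp_def)
    next
      case False
      then have "x = gg + int r" using j(2) xy y1 by (simp add: inl_def)
      then have "P ! j = N" using j stepc[OF j(1)] xy y1 step_cases[of "P ! j"] by (auto simp: inl_def)
      then show ?thesis using False xy y1 by (simp add: stp_def)
    qed
  qed
qed

lemma landg: "\<exists>i. 1 \<le> i \<and> i \<le> len \<and> P ! (i - 1) = N \<and> c i = (gg, 0)"
  using LS_witness[OF gP uu_mem[OF gP]] .
lemma landb: "\<exists>i. 1 \<le> i \<and> i \<le> len \<and> P ! (i - 1) = N \<and> c i = (bb, 1)"
  using LS_witness[OF gP vv_mem[OF gP]] .

lemma vis0': "i \<le> len \<Longrightarrow> c i = (p, 0) \<Longrightarrow> gg \<le> p" using vis0[OF gP] .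
lemma vis1': "i \<le> len \<Longrightarrow> c i = (p, 1) \<Longrightarrow> bb \<le> p" using vis1[OF gP] .

end


context PP
begin

lemma vcontra: "1 \<le> i \<Longrightarrow> i < j \<Longrightarrow> j \<le> len \<Longrightarrow> P ! (i - 1) = E \<Longrightarrow> c j = c i \<Longrightarrow> P ! (j - 1) = N \<Longrightarrow> False"
  using vP unfolding vl_def by fastforce

lemma caseA:
  assumes S1: "s \<le> len" "\<And>j. j \<le> len \<Longrightarrow> inl r gg bb (c j) \<Longrightarrow> j \<le> s"
    and S2: "\<And>j. j \<le> s \<Longrightarrow> inl r gg bb (c j)"
  shows "r + 2 \<le> s"
proof -
  have i0: "inl r gg bb (c 0)" using S2[of 0] by simp
  then have g0: "gg \<le> 0" "0 \<le> bb" by (auto simp: inl_def)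
  define B where "B = nat bb"
  have Bi: "int B = bb" using g0 by (simp add: B_def)
  have c0: "c 0 = (0, 0)" by simp
  have Ble: "B \<le> len"
  proof (rule ccontr)
    assume "\<not> B \<le> len"
    then have "0 + int (len - 0) = 0" using run0_end[OF c0, of B] Bi by simp
    then show False using len_pos by simp
  qed
  have cB: "c B = (bb, 0)" using run0[OF c0, of B] Bi Ble by simp
  have runE: "P ! (j - 1) = E" if "1 \<le> j" "j \<le> B" for j
    using run0[OF c0, of j] that Bi Ble by simp
  obtain tau where tau: "1 \<le> tau" "tau \<le> len" "P ! (tau - 1) = N" "c tau = (gg, 0)" using landg by blast
  have taus: "tau \<le> s" using S1(2)[OF tau(2)] tau(4) gb by (simp add: inl_def)
  have tB: "B < tau"
  proof (rule ccontr)
    assume "\<not> B < tau"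
    then show False using runE[of tau] tau by simp
  qed
  have BL: "B < len" using tB tau by simp
  have c1: "c (Suc B) = (bb, 1)" using H0[OF BL cB] S2[of "Suc B"] tB taus by simp
  define K1 where "K1 = nat (gg + int r - bb)"
  have K1i: "int K1 = gg + int r - bb" using gb by (simp add: K1_def)
  have r1: "Suc B + K1 < len" "c (Suc B + K1) = (gg + int r, 1)"
    using run1[OF c1, of K1] BL K1i by auto
  have tT1: "Suc B + K1 < tau"
  proof (rule ccontr)
    assume h: "\<not> Suc B + K1 < tau"
    have "c (Suc B + (tau - Suc B)) = (bb + int (tau - Suc B), 1)"
      using run1[OF c1, of "tau - Suc B"] BL h K1i by simp
    then show False using tau tB by simp
  qed
  have c2: "c (Suc (Suc B + K1)) = (gg, 0)"
    using H1[OF r1(1) r1(2)] S2[of "Suc (Suc B + K1)"] tT1 taus by simp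
  define K2 where "K2 = nat (- gg)"
  have K2i: "int K2 = - gg" using g0 by (simp add: K2_def)
  define T2 where "T2 = Suc (Suc B + K1)"
  have T2v: "T2 + K2 = r + 2"
  proof -
    have "int (T2 + K2) = int (r + 2)" unfolding T2_def using Bi K1i K2i by simp
    then show ?thesis by linarith
  qed
  show ?thesis
  proof (cases "T2 + K2 \<le> len")
    case True
    have "c (T2 + K2) = (0, 0)" using run0[of T2 gg K2] c2 True K2i g0 unfolding T2_def by simp
    then have "inl r gg bb (c (T2 + K2))" using g0 by (simp add: inl_def)
    then show ?thesis using S1(2)[OF True] T2v by simp
  next
    case False
    have "gg + int (len - T2) = 0" using run0_end[of T2 gg K2] c2 False K2i g0 r1(1) unfolding T2_def by simp
    moreover have "T2 \<le> len" using r1(1) unfolding T2_def by simp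
    ultimately have "len = T2 + K2" using K2i False by linarith
    then show ?thesis using False by simp
  qed
qed

lemma caseB:
  assumes S1: "s \<le> len" "\<And>j. j \<le> len \<Longrightarrow> inl r gg bb (c j) \<Longrightarrow> j \<le> s"
    and S2: "e \<le> s" "\<And>j. e \<le> j \<Longrightarrow> j \<le> s \<Longrightarrow> inl r gg bb (c j)"
    and S3: "\<And>x. x \<le> s \<Longrightarrow> (\<And>j. x \<le> j \<Longrightarrow> j \<le> s \<Longrightarrow> inl r gg bb (c j)) \<Longrightarrow> e \<le> x"
    and S4: "\<not> inl r gg bb (c (e - 1))"
    and e: "0 < e" "c e = (p, 0)" "gg < p" "p \<le> bb" "P ! (e - 1) = N"
  shows "e + (r + 2) \<le> s"
proof -
  have elen: "e \<le> len" using S1 S2 by simp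
  obtain tau where tau: "1 \<le> tau" "tau \<le> len" "P ! (tau - 1) = N" "c tau = (gg, 0)" using landg by blast
  have taus: "tau \<le> s" using S1(2)[OF tau(2)] tau(4) gb by (simp add: inl_def)
  have tne: "tau \<noteq> e" using tau e by auto
  show ?thesis
  proof (cases "tau < e")
    case True
    define K where "K = nat (p - gg)"
    have Ki: "int K = p - gg" using e by (simp add: K_def)
    show ?thesis
    proof (cases "tau + K \<le> len")
      case fits: True
      have r0: "c (tau + K) = (p, 0)" "P ! (tau + K - 1) = E"
        using run0[OF tau(4), of K] fits Ki e by auto
      show ?thesis
      proof (cases "e \<le> tau + K")
        case True
        have "c (tau + (e - 1 - tau)) = (gg + int (e - 1 - tau), 0)"
          using run0[OF tau(4), of "e - 1 - tau"] Ki e fits True \<open>tau < e\<close> by simp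
        moreover have "tau + (e - 1 - tau) = e - 1" using \<open>tau < e\<close> by simp
        moreover have "gg + int (e - 1 - tau) < p" using Ki True \<open>tau < e\<close> by linarith
        ultimately have "inl r gg bb (c (e - 1))" using e by (simp add: inl_def)
        then show ?thesis using S4 by simp
      next
        case False
        have "1 \<le> tau + K" using tau by simp
        from vcontra[OF this _ elen r0(2)] False r0(1) e show ?thesis by simp
      qed
    next
      case nofit: False
      have z: "gg + int (len - tau) = 0" using run0_end[OF tau(4) tau(2), of K] nofit Ki e by simp
      have allin: "inl r gg bb (c j)" if "tau \<le> j" "j \<le> len" for j
      proof -
        have "c (tau + (j - tau)) = (gg + int (j - tau), 0)"
          using run0[OF tau(4), of "j - tau"] that Ki e nofit by simp
        moreover have "gg + int (j - tau) \<le> bb" using Ki e nofit that by linarith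
        ultimately show ?thesis using that by (simp add: inl_def)
      qed
      have "len \<le> s" using S1(2)[OF le_refl allin[OF tau(2) le_refl]] .
      then have "e \<le> tau" using S3[OF taus] allin S1(1) by simp
      then show ?thesis using True by simp
    qed
  next
    case False
    then have te: "e < tau" using tne by simp
    define K0 where "K0 = nat (bb - p)"
    have K0i: "int K0 = bb - p" using e by (simp add: K0_def)
    have cells_e: "c (e + k) = (p + int k, 0)" if "k \<le> K0" "e + k \<le> len" for k
      using run0[OF e(2), of k] that K0i by simp
    have fit1: "e + K0 \<le> len"
    proof (rule ccontr)
      assume nf: "\<not> e + K0 \<le> len"
      have "c (e + (tau - e)) = (p + int (tau - e), 0)" using cells_e[of "tau - e"] nf te tau by simp
      then show False using tau te e by simp
    qed
    have ct1: "c (e + K0) = (bb, 0)" using cells_e[OF le_refl fit1] K0i by simp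
    have tt1: "e + K0 < tau"
    proof (rule ccontr)
      assume h: "\<not> e + K0 < tau"
      have "c (e + (tau - e)) = (p + int (tau - e), 0)" using cells_e[of "tau - e"] h te tau by simp
      then show False using tau te e by simp
    qed
    have t1l: "e + K0 < len" using tt1 tau by simp
    have c1: "c (Suc (e + K0)) = (bb, 1)" using H0[OF t1l ct1] S2(2)[of "Suc (e + K0)"] tt1 taus by simp
    define K1 where "K1 = nat (gg + int r - bb)"
    have K1i: "int K1 = gg + int r - bb" using gb by (simp add: K1_def)
    have r1: "Suc (e + K0) + K1 < len" "c (Suc (e + K0) + K1) = (gg + int r, 1)"
      using run1[OF c1, of K1] t1l K1i by auto
    have tt2: "Suc (e + K0) + K1 < tau"
    proof (rule ccontr)
      assume h: "\<not> Suc (e + K0) + K1 < tau"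
      have "c (Suc (e + K0) + (tau - Suc (e + K0))) = (bb + int (tau - Suc (e + K0)), 1)"
        using run1[OF c1, of "tau - Suc (e + K0)"] t1l h K1i by simp
      then show False using tau tt1 by simp
    qed
    define T2 where "T2 = Suc (Suc (e + K0) + K1)"
    have c2: "c T2 = (gg, 0)" unfolding T2_def
      using H1[OF r1(1) r1(2)] S2(2)[of "Suc (Suc (e + K0) + K1)"] tt2 taus by simp
    have T2l: "T2 \<le> len" using r1(1) unfolding T2_def by simp
    define K2 where "K2 = nat (p - gg)"
    have K2i: "int K2 = p - gg" using e by (simp add: K2_def)
    have T3v: "T2 + K2 = e + (r + 2)"
    proof -
      have "int (T2 + K2) = int (e + (r + 2))" unfolding T2_def using K0i K1i K2i by simp
      then show ?thesis by linarith
    qed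
    show ?thesis
    proof (cases "T2 + K2 \<le> len")
      case True
      have "c (T2 + K2) = (p, 0)" using run0[OF c2, of K2] True K2i e by simp
      then have "inl r gg bb (c (T2 + K2))" using e by (simp add: inl_def)
      then show ?thesis using S1(2)[OF True] T3v by simp
    next
      case nofit: False
      have z: "gg + int (len - T2) = 0" using run0_end[OF c2 T2l, of K2] nofit K2i e by simp
      have p0: "0 < p" using z nofit K2i T2l by linarith
      define Kp where "Kp = nat p"
      have Kpi: "int Kp = p" using p0 by (simp add: Kp_def)
      have c00: "c 0 = (0, 0)" by simp
      have Kpl: "Kp \<le> len"
      proof (rule ccontr)
        assume "\<not> Kp \<le> len"
        then have "0 + int (len - 0) = 0" using run0_end[OF c00, of Kp] Kpi e by simp
        then show False using len_pos by simp
      qed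
      have rp: "c Kp = (p, 0)" "P ! (Kp - 1) = E" using run0[OF c00, of Kp] Kpl Kpi e p0 by auto
      show ?thesis
      proof (cases "e \<le> Kp")
        case True
        have "c (0 + (e - 1)) = (0 + int (e - 1), 0)" using run0[OF c00, of "e - 1"] Kpi e True Kpl by simp
        moreover have "int (e - 1) < p" using True Kpi e by linarith
        ultimately have "inl r gg bb (c (e - 1))" using e uu_le0[OF gP] by (simp add: inl_def)
        then show ?thesis using S4 by simp
      next
        case False
        have "1 \<le> Kp" using Kpi p0 by linarith
        from vcontra[OF this _ elen rp(2)] False rp(1) e show ?thesis by simp
      qed
    qed
  qed
qed

lemma caseC:
  assumes S1: "s \<le> len" "\<And>j. j \<le> len \<Longrightarrow> inl r gg bb (c j) \<Longrightarrow> j \<le> s"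
    and S2: "e \<le> s" "\<And>j. e \<le> j \<Longrightarrow> j \<le> s \<Longrightarrow> inl r gg bb (c j)"
    and S4: "\<not> inl r gg bb (c (e - 1))"
    and e: "0 < e" "c e = (p, 1)" "bb < p" "p \<le> gg + int r" "P ! (e - 1) = N"
  shows "e + (r + 2) \<le> s"
proof -
  have elen: "e \<le> len" using S1 S2 by simp
  obtain tau where tau: "1 \<le> tau" "tau \<le> len" "P ! (tau - 1) = N" "c tau = (bb, 1)" using landb by blast
  have taus: "tau \<le> s" using S1(2)[OF tau(2)] tau(4) gb by (simp add: inl_def)
  have tne: "tau \<noteq> e" using tau e by auto
  show ?thesis
  proof (cases "tau < e")
    case True
    define K where "K = nat (p - bb)"
    have Ki: "int K = p - bb" using e by (simp add: K_def)
    have r1: "tau + K < len" "c (tau + K) = (p, 1)" "P ! (tau + K - 1) = E"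
      using run1[OF tau(4) tau(2), of K] Ki e by auto
    show ?thesis
    proof (cases "e \<le> tau + K")
      case True
      have "c (tau + (e - 1 - tau)) = (bb + int (e - 1 - tau), 1)"
        using run1[OF tau(4) tau(2), of "e - 1 - tau"] Ki e True \<open>tau < e\<close> by simp
      moreover have "tau + (e - 1 - tau) = e - 1" using \<open>tau < e\<close> by simp
      moreover have "bb + int (e - 1 - tau) < p" using Ki True \<open>tau < e\<close> by linarith
      ultimately have "inl r gg bb (c (e - 1))" using e by (simp add: inl_def)
      then show ?thesis using S4 by simp
    next
      case False
      have "1 \<le> tau + K" using tau by simp
      from vcontra[OF this _ elen r1(3)] False r1(2) e show ?thesis by simp
    qed
  next
    case False
    then have te: "e < tau" using tne by simp
    define K0 where "K0 = nat (gg + int r - p)"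
    have K0i: "int K0 = gg + int r - p" using e by (simp add: K0_def)
    have cells_e: "e + k < len \<and> c (e + k) = (p + int k, 1)" if "k \<le> K0" for k
      using run1[OF e(2) elen, of k] that K0i by simp
    have ct1: "c (e + K0) = (gg + int r, 1)" "e + K0 < len" using cells_e[OF le_refl] K0i by auto
    have tt1: "e + K0 < tau"
    proof (rule ccontr)
      assume h: "\<not> e + K0 < tau"
      have "c (e + (tau - e)) = (p + int (tau - e), 1)" using cells_e[of "tau - e"] h te by simp
      then show False using tau te e by simp
    qed
    have c1: "c (Suc (e + K0)) = (gg, 0)" using H1[OF ct1(2) ct1(1)] S2(2)[of "Suc (e + K0)"] tt1 taus by simp
    define K1 where "K1 = nat (bb - gg)"
    have K1i: "int K1 = bb - gg" using gb by (simp add: K1_def)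
    have T1l: "Suc (e + K0) \<le> len" using ct1 by simp
    have cells1: "c (Suc (e + K0) + k) = (gg + int k, 0)" if "k \<le> K1" "Suc (e + K0) + k \<le> len" for k
      using run0[OF c1, of k] that K1i by simp
    have fit: "Suc (e + K0) + K1 \<le> len"
    proof (rule ccontr)
      assume nf: "\<not> Suc (e + K0) + K1 \<le> len"
      have "c (Suc (e + K0) + (tau - Suc (e + K0))) = (gg + int (tau - Suc (e + K0)), 0)"
        using cells1[of "tau - Suc (e + K0)"] nf tt1 tau by simp
      then show False using tau tt1 by simp
    qed
    have ct2: "c (Suc (e + K0) + K1) = (bb, 0)" using cells1[OF le_refl fit] K1i by simp
    have tt2: "Suc (e + K0) + K1 < tau"
    proof (rule ccontr)
      assume h: "\<not> Suc (e + K0) + K1 < tau"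
      have k: "tau - Suc (e + K0) \<le> K1" using h by linarith
      have "c (Suc (e + K0) + (tau - Suc (e + K0))) = (gg + int (tau - Suc (e + K0)), 0)"
        using cells1[OF k] tt1 tau by simp
      then show False using tau tt1 by simp
    qed
    have t2l: "Suc (e + K0) + K1 < len" using tt2 tau by simp
    have c2: "c (Suc (Suc (e + K0) + K1)) = (bb, 1)"
      using H0[OF t2l ct2] S2(2)[of "Suc (Suc (e + K0) + K1)"] tt2 taus by simp
    define T2 where "T2 = Suc (Suc (e + K0) + K1)"
    define K2 where "K2 = nat (p - bb)"
    have K2i: "int K2 = p - bb" using e by (simp add: K2_def)
    have r3: "T2 + K2 < len" "c (T2 + K2) = (p, 1)"
      using run1[of T2 bb K2] c2 t2l K2i e unfolding T2_def by auto
    have T3v: "T2 + K2 = e + (r + 2)"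
    proof -
      have "int (T2 + K2) = int (e + (r + 2))" unfolding T2_def using K0i K1i K2i by simp
      then show ?thesis by linarith
    qed
    have "inl r gg bb (c (T2 + K2))" using r3 e by (simp add: inl_def)
    then show ?thesis using S1(2)[of "T2 + K2"] r3 T3v by simp
  qed
qed

end


context PP
begin

abbreviation "ss \<equiv> lv r P gg bb"

lemma visit_ex: "\<exists>i \<le> len. inl r gg bb (c i)"
  using landg gb by (force simp: inl_def)

lemma S1: "ss \<le> len" "inl r gg bb (c ss)" "\<And>j. j \<le> len \<Longrightarrow> inl r gg bb (c j) \<Longrightarrow> j \<le> ss"
  using lv_props[OF visit_ex] by auto

definition ES where "ES = {x. x \<le> ss \<and> (\<forall>j. x \<le> j \<and> j \<le> ss \<longrightarrow> inl r gg bb (c j))}"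
definition ee where "ee = Min ES"

lemma ES_fin: "finite ES" unfolding ES_def by (rule finite_subset[of _ "{0..ss}"]) auto
lemma ES_ne: "ss \<in> ES" unfolding ES_def using S1 by auto

lemma ee_props: "ee \<le> ss" "\<And>j. ee \<le> j \<Longrightarrow> j \<le> ss \<Longrightarrow> inl r gg bb (c j)"
  "\<And>x. x \<le> ss \<Longrightarrow> (\<And>j. x \<le> j \<Longrightarrow> j \<le> ss \<Longrightarrow> inl r gg bb (c j)) \<Longrightarrow> ee \<le> x"
  "0 < ee \<Longrightarrow> \<not> inl r gg bb (c (ee - 1))"
proof -
  have m: "ee \<in> ES" unfolding ee_def using Min_in[OF ES_fin] ES_ne by auto
  then show "ee \<le> ss" "\<And>j. ee \<le> j \<Longrightarrow> j \<le> ss \<Longrightarrow> inl r gg bb (c j)" unfolding ES_def by auto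
  show le: "\<And>x. x \<le> ss \<Longrightarrow> (\<And>j. x \<le> j \<Longrightarrow> j \<le> ss \<Longrightarrow> inl r gg bb (c j)) \<Longrightarrow> ee \<le> x"
  proof -
    fix x assume "x \<le> ss" "\<And>j. x \<le> j \<Longrightarrow> j \<le> ss \<Longrightarrow> inl r gg bb (c j)"
    then have "x \<in> ES" unfolding ES_def by auto
    then show "ee \<le> x" unfolding ee_def using Min_le[OF ES_fin] by simp
  qed
  show "0 < ee \<Longrightarrow> \<not> inl r gg bb (c (ee - 1))"
  proof
    assume e: "0 < ee" and h: "inl r gg bb (c (ee - 1))"
    have "ee \<le> ee - 1"
    proof (rule le)
      show "ee - 1 \<le> ss" using \<open>ee \<le> ss\<close> by simp
      fix j assume "ee - 1 \<le> j" "j \<le> ss"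
      then show "inl r gg bb (c j)"
        using h \<open>\<And>j. ee \<le> j \<Longrightarrow> j \<le> ss \<Longrightarrow> inl r gg bb (c j)\<close>
        by (cases "j = ee - 1") auto
    qed
    then show False using e by simp
  qed
qed

lemma inl_0: "inl r g b (x, 0) \<longleftrightarrow> g \<le> x \<and> x \<le> b" by (simp add: inl_def)
lemma inl_1: "inl r g b (x, 1) \<longleftrightarrow> b \<le> x \<and> x \<le> g + int r" by (simp add: inl_def)

lemma seg_main: "ee + (r + 2) \<le> ss"
proof (cases "ee = 0")
  case True
  have "r + 2 \<le> ss" using caseA[OF S1(1) S1(3)] ee_props(2) True by simp
  then show ?thesis using True by simp
next
  case False
  then have e0: "0 < ee" by simp
  have elen: "ee \<le> len" using ee_props(1) S1(1) by simp
  have notin: "\<not> inl r gg bb (c (ee - 1))" using ee_props(4)[OF e0] .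
  have inE: "inl r gg bb (c ee)" using ee_props(2)[OF le_refl ee_props(1)] .
  obtain x y where xy: "c (ee - 1) = (x, y)" by (cases "c (ee - 1)")
  have y: "y = 0 \<or> y = 1" using row_cl[of r P "ee - 1"] xy by simp
  have st: "c ee = mv r (c (ee - 1)) (P ! (ee - 1))" using cl_step[of ee P r] e0 elen by simp
  have e1len: "ee - 1 \<le> len" using elen by simp
  show ?thesis
  proof (cases "P ! (ee - 1)")
    case E
    then have ce: "c ee = (x + 1, y)" using st xy by simp
    show ?thesis
    proof (cases "y = 0")
      case True
      have a: "gg \<le> x + 1" "x + 1 \<le> bb" using inE ce True inl_0 by auto
      have b: "\<not> (gg \<le> x \<and> x \<le> bb)" using notin xy True inl_0 by auto
      have "gg \<le> x" using vis0'[OF e1len] xy True by simp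
      then show ?thesis using a b by simp
    next
      case False
      then have y1: "y = 1" using y by simp
      have a: "bb \<le> x + 1" "x + 1 \<le> gg + int r" using inE ce y1 inl_1 by auto
      have b: "\<not> (bb \<le> x \<and> x \<le> gg + int r)" using notin xy y1 inl_1 by auto
      have "bb \<le> x" using vis1'[OF e1len] xy y1 by simp
      then show ?thesis using a b by simp
    qed
  next
    case N
    show ?thesis
    proof (cases "y = 0")
      case True
      then have ce: "c ee = (x, 1)" using st xy N by simp
      have a: "bb \<le> x" "x \<le> gg + int r" using inE ce inl_1 by auto
      have b: "\<not> (gg \<le> x \<and> x \<le> bb)" using notin xy True inl_0 by auto
      have "bb < x" using a b gb by linarith
      from caseC[OF S1(1) S1(3) ee_props(1) ee_props(2) notin e0 ce this a(2) N] show ?thesis .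
    next
      case False
      then have y1: "y = 1" using y by simp
      then have ce: "c ee = (x - int r, 0)" using st xy N by simp
      have "bb \<le> x" using vis1'[OF e1len] xy y1 by simp
      have a: "gg \<le> x - int r" "x - int r \<le> bb" using inE ce inl_0 by auto
      have b: "\<not> (bb \<le> x \<and> x \<le> gg + int r)" using notin xy y1 inl_1 by auto
      have "gg < x - int r" using a b \<open>bb \<le> x\<close> by linarith
      from caseB[OF S1(1) S1(3) ee_props(1) ee_props(2) ee_props(3) notin e0 ce this a(2) N] show ?thesis .
    qed
  qed
qed

abbreviation "LL \<equiv> r + 2"
abbreviation "c0 \<equiv> c (ss - LL)"

lemma window_in: "LL \<le> ss" "\<And>j. ss - LL \<le> j \<Longrightarrow> j \<le> ss \<Longrightarrow> inl r gg bb (c j)"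
  using seg_main ee_props(2) by auto

lemma window_cells: "k \<le> LL \<Longrightarrow> c (ss - LL + k) = cellAt gg bb ((pos gg bb c0 + k) mod LL)"
proof (induct k)
  case 0
  have "inl r gg bb c0" using window_in by simp
  then show ?case using cellAt_pos[OF gb] by simp
next
  case (Suc k)
  let ?j = "ss - LL + k"
  have jl: "?j < len" using Suc window_in(1) S1(1) by simp
  have b1: "ss - LL \<le> ?j" "?j \<le> ss" "ss - LL \<le> Suc ?j" "Suc ?j \<le> ss" using Suc.prems window_in(1) by auto
  have i1: "inl r gg bb (c ?j)" "inl r gg bb (c (Suc ?j))"
    using window_in(2)[OF b1(1,2)] window_in(2)[OF b1(3,4)] by auto
  have "c (Suc ?j) = mv r (c ?j) (stp r gg bb (c ?j))" using stepc[OF jl] step_in[OF jl i1] by simp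
  also have "\<dots> = cellAt gg bb (Suc (pos gg bb (c ?j)) mod LL)" using mv_stp[OF gb i1(1)] .
  also have "pos gg bb (c ?j) = (pos gg bb c0 + k) mod LL" using Suc pos_cellAt[OF gb] by simp
  also have "Suc ((pos gg bb c0 + k) mod LL) mod LL = (pos gg bb c0 + Suc k) mod LL" by (simp add: mod_Suc_eq)
  finally show ?case using window_in(1) by (simp add: add.commute add.left_commute)
qed

lemma window_word: "take LL (drop (ss - LL) P) = lw r gg bb c0"
proof (rule nth_equalityI)
  show "length (take LL (drop (ss - LL) P)) = length (lw r gg bb c0)"
    using lw_len[OF gb] window_in(1) S1(1) by simp
  fix k assume "k < length (take LL (drop (ss - LL) P))"
  then have k: "k < LL" and kl: "ss - LL + k < len" using window_in(1) S1(1) by auto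
  have i1: "inl r gg bb (c (ss - LL + k))" "inl r gg bb (c (Suc (ss - LL + k)))" using window_in k by auto
  have "take LL (drop (ss - LL) P) ! k = P ! (ss - LL + k)" using k kl by simp
  also have "\<dots> = stp r gg bb (c (ss - LL + k))" using step_in[OF kl i1] .
  also have "\<dots> = bw r gg bb ! pos gg bb (c (ss - LL + k))" using stp_bw_pos[OF gb i1(1)] .
  also have "pos gg bb (c (ss - LL + k)) = (pos gg bb c0 + k) mod LL"
    using window_cells[of k] k pos_cellAt[OF gb] by simp
  also have "bw r gg bb ! ((pos gg bb c0 + k) mod LL) = lw r gg bb c0 ! k" using lw_nth[OF gb k] by simp
  finally show "take LL (drop (ss - LL) P) ! k = lw r gg bb c0 ! k" .
qed

abbreviation "QQ \<equiv> take (ss - LL) P @ drop ss P"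

lemma sl: "ss - LL \<le> len" "ss \<le> len" "LL \<le> ss" using window_in(1) S1(1) by auto

lemma QQ_take: "take (ss - LL) QQ = take (ss - LL) P"
  using sl by (simp add: min_absorb2)

lemma QQ_drop: "drop (ss - LL) QQ = drop ss P"
  using sl by (simp add: min_absorb2)

lemma P_ins: "P = ins (ss - LL) (lw r gg bb c0) QQ"
proof -
  have e: "LL + (ss - LL) = ss" using sl(3) by simp
  have d: "drop ss P = drop LL (drop (ss - LL) P)"
    unfolding drop_drop e ..
  have "ins (ss - LL) (lw r gg bb c0) QQ = take (ss - LL) P @ take LL (drop (ss - LL) P) @ drop ss P"
    unfolding ins_def QQ_take QQ_drop window_word ..
  also have "take LL (drop (ss - LL) P) @ drop ss P = drop (ss - LL) P"
    unfolding d by (rule append_take_drop_id)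
  finally show ?thesis by simp
qed

lemma QQ_len: "length QQ = len - LL" "ss - LL \<le> length QQ" using sl by auto

lemma QQ_c0: "cl r QQ (ss - LL) = c0"
  unfolding clf_def QQ_take ..

lemma c0_inl: "inl r gg bb c0" using window_in by simp

lemma lw_len0: "length (lw r gg bb c0) = LL" using lw_len[OF gb] .

lemma QQ_closed: "clf r (cl r QQ (ss - LL)) (lw r gg bb c0) (length (lw r gg bb c0)) = cl r QQ (ss - LL)"
  unfolding QQ_c0 lw_len0 using lw_closed[OF gb c0_inl] .

lemma PI: "ins (ss - LL) (lw r gg bb c0) QQ = P" using P_ins by simp

lemma QQ_vl: "vl r QQ"
proof (rule vl_remove[OF _ QQ_len(2) QQ_closed])
  show "vl r (ins (ss - LL) (lw r gg bb c0) QQ)" unfolding PI by (rule vP)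
qed

lemma QQ_cnt: "cnt x QQ + cnt x (lw r gg bb c0) = cnt x P"
proof -
  have "cnt x (ins (ss - LL) (lw r gg bb c0) QQ) = cnt x QQ + cnt x (lw r gg bb c0)" by (rule ins_cnt)
  then show ?thesis unfolding PI by simp
qed

lemma QQ_cnt': "cnt E QQ + r = cnt E P" "cnt N QQ + 2 = cnt N P"
  using QQ_cnt[of E] QQ_cnt[of N] lw_cnt[OF gb] by simp_all

lemma QQ_cl: "cl r P i = (if i \<le> ss - LL then cl r QQ i else if i \<le> ss - LL + LL then clf r (cl r QQ (ss - LL)) (lw r gg bb c0) (i - (ss - LL))
      else cl r QQ (i - LL))"
proof -
  have "cl r (ins (ss - LL) (lw r gg bb c0) QQ) i = (if i \<le> ss - LL then cl r QQ i
      else if i \<le> ss - LL + length (lw r gg bb c0) then clf r (cl r QQ (ss - LL)) (lw r gg bb c0) (i - (ss - LL))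
      else cl r QQ (i - length (lw r gg bb c0)))"
    by (rule ins_cl[OF QQ_len(2) QQ_closed])
  then show ?thesis unfolding PI lw_len0 .
qed

lemma QQ_nth: "1 \<le> i \<Longrightarrow> i \<le> length QQ + LL \<Longrightarrow> P ! (i - 1) =
     (if i \<le> ss - LL then QQ ! (i - 1) else if i \<le> ss - LL + LL then lw r gg bb c0 ! (i - 1 - (ss - LL))
      else QQ ! (i - 1 - LL))"
proof -
  assume i: "1 \<le> i" "i \<le> length QQ + LL"
  have "ins (ss - LL) (lw r gg bb c0) QQ ! (i - 1) = (if i \<le> ss - LL then QQ ! (i - 1)
     else if i \<le> ss - LL + length (lw r gg bb c0) then lw r gg bb c0 ! (i - 1 - (ss - LL))
     else QQ ! (i - 1 - length (lw r gg bb c0)))"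
    using ins_nth[OF QQ_len(2) i(1)] i(2) lw_len0 by simp
  then show ?thesis unfolding PI lw_len0 .
qed

lemma QQ_LS: "LS r QQ k \<subseteq> LS r P k"
proof
  fix q assume "q \<in> LS r QQ k"
  then obtain i where i: "1 \<le> i" "i \<le> length QQ" "QQ ! (i - 1) = N" "cl r QQ i = (q, k)"
    unfolding LS_def by blast
  define f where "f = (if i \<le> ss - LL then i else i + LL)"
  have fl: "1 \<le> f" "f \<le> length QQ + LL" using i by (auto simp: f_def)
  have "P ! (f - 1) = QQ ! (i - 1)"
    using QQ_nth[OF fl] by (auto simp: f_def)
  then have n: "P ! (f - 1) = N" using i by simp
  have "cl r P f = cl r QQ i" using QQ_cl[of f] by (auto simp: f_def)
  moreover have "f \<le> len" using fl QQ_len sl by simp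
  ultimately show "q \<in> LS r P k" unfolding LS_def using n fl i by (intro CollectI exI[of _ f]) auto
qed

lemma QQ_lv: "lv r QQ gg bb = ss - LL"
proof (rule lv_unique)
  show "ss - LL \<le> length QQ" using QQ_len by simp
  show "inl r gg bb (cl r QQ (ss - LL))" using QQ_c0 window_in by simp
  fix j assume j: "j \<le> length QQ" "ss - LL < j"
  have "cl r P (j + LL) = cl r QQ j" using QQ_cl[of "j + LL"] j by simp
  moreover have "\<not> inl r gg bb (cl r P (j + LL))"
  proof
    assume "inl r gg bb (cl r P (j + LL))"
    then have "j + LL \<le> ss" using S1(3)[of "j + LL"] j QQ_len by simp
    then show False using j by simp
  qed
  ultimately show "\<not> inl r gg bb (cl r QQ j)" by simp
qed

lemma Phi_eq: "Phi r P = (QQ, (gg, bb))"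
  unfolding Phi_def Let_def by simp

end


section \<open>Counting the admissible loops\<close>

definition TT :: "nat \<Rightarrow> (nat \<times> nat) set" where
  "TT r = {(x, y). x \<le> y \<and> y \<le> r}"

lemma TT_fin: "finite (TT r)"
  by (rule finite_subset[of _ "{0..r} \<times> {0..r}"]) (auto simp: TT_def)

lemma TT_card: "card (TT r) = (r + 2) choose 2"
proof (induct r)
  case 0
  have "TT 0 = {(0,0)}" by (auto simp: TT_def)
  then show ?case by (simp add: choose_two)
next
  case (Suc r)
  have eq: "TT (Suc r) = TT r \<union> (\<lambda>x. (x, Suc r)) ` {0..Suc r}" by (auto simp: TT_def)
  have disj: "TT r \<inter> (\<lambda>x. (x, Suc r)) ` {0..Suc r} = {}" by (auto simp: TT_def)
  have "card (TT (Suc r)) = card (TT r) + card ((\<lambda>x. (x, Suc r)) ` {0..Suc r})"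
    unfolding eq by (rule card_Un_disjoint[OF TT_fin _ disj]) simp
  also have "card ((\<lambda>x. (x, Suc r)) ` {0..Suc r}) = r + 2"
    by (subst card_image) (auto simp: inj_on_def)
  also have "card (TT r) + (r + 2) = (Suc r + 2) choose 2"
    using Suc by (simp add: choose_two)
  finally show ?case .
qed

definition SS :: "nat \<Rightarrow> int \<Rightarrow> int \<Rightarrow> (int \<times> int) set" where
  "SS r u v = {(g, b). g \<le> u \<and> b \<le> v \<and> g \<le> b \<and> b \<le> g + int r \<and> (u \<le> b \<or> v \<le> g + int r)}"

definition phiS :: "nat \<Rightarrow> int \<Rightarrow> int \<Rightarrow> int \<times> int \<Rightarrow> nat \<times> nat" where
  "phiS r u v gb = (case gb of (g, b) \<Rightarrow>
     (if u - g \<le> int r - (v - u) then (nat (b - g), nat ((v - u) + (u - g)))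
      else (nat (b - u), nat (int r - (u - g)))))"

definition psiS :: "nat \<Rightarrow> int \<Rightarrow> int \<Rightarrow> nat \<times> nat \<Rightarrow> int \<times> int" where
  "psiS r u v xy = (case xy of (x, y) \<Rightarrow>
     (if v - u \<le> int y then (u - (int y - (v - u)), u - (int y - (v - u)) + int x)
      else (u - (int r - int y), u + int x)))"

lemma SS_bij:
  assumes uv: "u \<le> v" "v \<le> u + int r"
  shows "bij_betw (phiS r u v) (SS r u v) (TT r)"
proof (rule bij_betw_byWitness[where f' = "psiS r u v"])
  show "\<forall>a\<in>SS r u v. psiS r u v (phiS r u v a) = a"
  proof
    fix a assume a: "a \<in> SS r u v"
    obtain g b where gb: "a = (g, b)" by (cases a)
    have h: "g \<le> u" "b \<le> v" "g \<le> b" "b \<le> g + int r" "u \<le> b \<or> v \<le> g + int r"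
      using a gb by (auto simp: SS_def)
    show "psiS r u v (phiS r u v a) = a"
    proof (cases "u - g \<le> int r - (v - u)")
      case True
      then have p: "phiS r u v a = (nat (b - g), nat ((v - u) + (u - g)))" by (simp add: phiS_def gb)
      have "v - u \<le> int (nat ((v - u) + (u - g)))" using h uv by simp
      then show ?thesis using p h uv gb by (simp add: psiS_def)
    next
      case False
      then have p: "phiS r u v a = (nat (b - u), nat (int r - (u - g)))" by (simp add: phiS_def gb)
      have ub: "u \<le> b" using h False by linarith
      have "\<not> v - u \<le> int (nat (int r - (u - g)))" using False h uv ub by linarith
      then show ?thesis using p h uv gb ub by (simp add: psiS_def)
    qed
  qed
  show "\<forall>a'\<in>TT r. phiS r u v (psiS r u v a') = a'"
  proof
    fix a' assume a': "a' \<in> TT r"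
    obtain x y where xy: "a' = (x, y)" by (cases a')
    have h: "x \<le> y" "y \<le> r" using a' xy by (auto simp: TT_def)
    show "phiS r u v (psiS r u v a') = a'"
    proof (cases "v - u \<le> int y")
      case True
      then have p: "psiS r u v a' = (u - (int y - (v - u)), u - (int y - (v - u)) + int x)" by (simp add: psiS_def xy)
      have "u - (u - (int y - (v - u))) \<le> int r - (v - u)" using h True by linarith
      then show ?thesis using p h True xy by (simp add: phiS_def)
    next
      case False
      then have p: "psiS r u v a' = (u - (int r - int y), u + int x)" by (simp add: psiS_def xy)
      have "\<not> u - (u - (int r - int y)) \<le> int r - (v - u)" using h False by linarith
      then show ?thesis using p h False xy by (simp add: phiS_def)
    qed
  qed
  show "phiS r u v ` SS r u v \<subseteq> TT r"
  proof
    fix z assume "z \<in> phiS r u v ` SS r u v"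
    then obtain g b where gb: "(g, b) \<in> SS r u v" "z = phiS r u v (g, b)" by auto
    have h: "g \<le> u" "b \<le> v" "g \<le> b" "b \<le> g + int r" "u \<le> b \<or> v \<le> g + int r"
      using gb by (auto simp: SS_def)
    show "z \<in> TT r"
    proof (cases "u - g \<le> int r - (v - u)")
      case True
      then show ?thesis using gb h uv by (simp add: phiS_def TT_def nat_le_iff)
    next
      case False
      have ub: "u \<le> b" using h False by linarith
      then show ?thesis using gb h uv False by (simp add: phiS_def TT_def nat_le_iff)
    qed
  qed
  show "psiS r u v ` TT r \<subseteq> SS r u v"
  proof
    fix z assume "z \<in> psiS r u v ` TT r"
    then obtain x y where xy: "x \<le> y" "y \<le> r" "z = psiS r u v (x, y)" by (auto simp: TT_def)
    show "z \<in> SS r u v"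
    proof (cases "v - u \<le> int y")
      case True
      then show ?thesis using xy uv by (simp add: psiS_def SS_def)
    next
      case False
      then show ?thesis using xy uv by (simp add: psiS_def SS_def)
    qed
  qed
qed

lemma SS_card: "u \<le> v \<Longrightarrow> v \<le> u + int r \<Longrightarrow> card (SS r u v) = (r + 2) choose 2 \<and> finite (SS r u v)"
  using SS_bij bij_betw_same_card TT_card bij_betw_finite TT_fin by metis

lemma AA_eq:
  assumes gQ: "good r Q"
  shows "AA r Q = SS r (uu r Q) (vv r Q)"
proof (rule set_eqI)
  fix z :: "int \<times> int"
  obtain g b where z: "z = (g, b)" by (cases z)
  have "(\<exists>i \<le> length Q. inl r g b (cl r Q i)) \<longleftrightarrow> (uu r Q \<le> b \<or> vv r Q \<le> g + int r)"
    if h: "g \<le> uu r Q" "b \<le> vv r Q" "g \<le> b" "b \<le> g + int r"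
  proof
    assume "\<exists>i \<le> length Q. inl r g b (cl r Q i)"
    then obtain i where i: "i \<le> length Q" "inl r g b (cl r Q i)" by blast
    obtain x y where xy: "cl r Q i = (x, y)" by (cases "cl r Q i")
    show "uu r Q \<le> b \<or> vv r Q \<le> g + int r"
    proof (cases "y = 0")
      case True
      then have "x \<le> b" using i xy by (simp add: inl_def)
      moreover have "uu r Q \<le> x" using vis0[OF gQ i(1)] xy True by simp
      ultimately show ?thesis by simp
    next
      case False
      then have "y = 1" "x \<le> g + int r" using i xy by (auto simp: inl_def)
      moreover have "vv r Q \<le> x" using vis1[OF gQ i(1)] xy \<open>y = 1\<close> by simp
      ultimately show ?thesis by simp
    qed
  next
    assume "uu r Q \<le> b \<or> vv r Q \<le> g + int r"
    then show "\<exists>i \<le> length Q. inl r g b (cl r Q i)"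
    proof
      assume ub: "uu r Q \<le> b"
      obtain i where i: "1 \<le> i" "i \<le> length Q" "Q ! (i - 1) = N" "cl r Q i = (uu r Q, 0)"
        using LS_witness[OF gQ uu_mem[OF gQ]] by blast
      then show ?thesis using h ub by (intro exI[of _ i]) (simp add: inl_def)
    next
      assume vb: "vv r Q \<le> g + int r"
      obtain i where i: "1 \<le> i" "i \<le> length Q" "Q ! (i - 1) = N" "cl r Q i = (vv r Q, 1)"
        using LS_witness[OF gQ vv_mem[OF gQ]] by blast
      then show ?thesis using h vb by (intro exI[of _ i]) (simp add: inl_def)
    qed
  qed
  then show "z \<in> AA r Q \<longleftrightarrow> z \<in> SS r (uu r Q) (vv r Q)"
    unfolding z AA_def SS_def by auto
qed

lemma AA_card: "good r Q \<Longrightarrow> card (AA r Q) = (r + 2) choose 2 \<and> finite (AA r Q)"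
  using AA_eq SS_card uu_vv by metis


lemma prefix_equiv:
  assumes tk: "take t P = take t Q" and Nq: "1 \<le> i" "i \<le> t" "Q ! (i - 1) = N"
    and tl: "t \<le> length Q" "t \<le> length P"
  shows "take (a + 1) P = replicate a E @ [N] \<longleftrightarrow> take (a + 1) Q = replicate a E @ [N]"
proof (cases "a + 1 \<le> t")
  case True
  have "take (a + 1) P = take (a + 1) (take t P)" using True by (simp add: min_absorb1)
  also have "\<dots> = take (a + 1) (take t Q)" using tk by simp
  also have "\<dots> = take (a + 1) Q" using True by (simp add: min_absorb1)
  finally show ?thesis by simp
next
  case False
  have Pn: "P ! (i - 1) = N"
  proof -
    have "P ! (i - 1) = take t P ! (i - 1)" using Nq by simp
    also have "\<dots> = take t Q ! (i - 1)" using tk by simp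
    also have "\<dots> = Q ! (i - 1)" using Nq by simp
    finally show ?thesis using Nq by simp
  qed
  have no: "take (a + 1) X \<noteq> replicate a E @ [N]" if "X ! (i - 1) = N" "t \<le> length X" for X
  proof
    assume h: "take (a + 1) X = replicate a E @ [N]"
    have "i - 1 < a" using False Nq by simp
    then have "(replicate a E @ [N]) ! (i - 1) = E" by (simp add: nth_append)
    moreover have "take (a + 1) X ! (i - 1) = X ! (i - 1)" using \<open>i - 1 < a\<close> by simp
    ultimately show False using h that by simp
  qed
  show ?thesis using no[of P] no[of Q] Pn Nq tl by simp
qed

definition VVa :: "nat \<Rightarrow> nat \<Rightarrow> nat \<Rightarrow> step list set" where
  "VVa r m a = {ps \<in> VV r m. take (a + 1) ps = replicate a E @ [N]}"

lemma VVa_fin: "finite (VVa r m a)"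
proof -
  have "VVa r m a \<subseteq> {xs. set xs \<subseteq> UNIV \<and> length xs = m * r + 2 * m}"
  proof
    fix xs assume "xs \<in> VVa r m a"
    then have "cnt E xs = m * r" "cnt N xs = 2 * m" by (auto simp: VVa_def VV_def)
    then show "xs \<in> {xs. set xs \<subseteq> UNIV \<and> length xs = m * r + 2 * m}"
      using cnt_EN[of xs] by simp
  qed
  moreover have "finite {xs. set xs \<subseteq> (UNIV :: step set) \<and> length xs = m * r + 2 * m}"
    by (rule finite_lists_length_eq) (simp add: UNIV_step)
  ultimately show ?thesis by (rule finite_subset)
qed

lemma step_bij:
  assumes m: "m \<ge> 1"
  shows "bij_betw (\<lambda>(Q, gb). Psi r Q gb) (SIGMA Q:VVa r m a. AA r Q) (VVa r (Suc m) a)"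
proof (rule bij_betw_byWitness[where f' = "Phi r"])
  show "\<forall>x\<in>(SIGMA Q:VVa r m a. AA r Q). Phi r ((\<lambda>(Q, gb). Psi r Q gb) x) = x"
  proof
    fix x assume x: "x \<in> (SIGMA Q:VVa r m a. AA r Q)"
    obtain Q g b where xq: "x = (Q, (g, b))" by (cases x) auto
    have Q: "Q \<in> VV r m" "(g, b) \<in> AA r Q" using x xq by (auto simp: VVa_def)
    have vQ: "vl r Q" using Q by (simp add: VV_def)
    have gQ: "good r Q" using VV_good[OF Q(1) m] .
    have "Psi r Q (g, b) \<in> VV r (Suc m)"
      using Psi_vl[OF vQ gQ Q(2)] Psi_cnt[OF vQ gQ Q(2)] Q(1) by (simp add: VV_def)
    then have "good r (Psi r Q (g, b))" using VV_good by simp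
    then show "Phi r ((\<lambda>(Q, gb). Psi r Q gb) x) = x" using Phi_Psi[OF vQ gQ Q(2)] xq by simp
  qed
  show "\<forall>y\<in>VVa r (Suc m) a. (\<lambda>(Q, gb). Psi r Q gb) (Phi r y) = y"
  proof
    fix P assume P: "P \<in> VVa r (Suc m) a"
    have vP: "vl r P" and gP: "good r P" using P VV_good[of P r "Suc m"] by (auto simp: VVa_def VV_def)
    interpret PP r P using vP gP by unfold_locales
    have "Psi r QQ (gg, bb) = ins (lv r QQ gg bb) (lw r gg bb (cl r QQ (lv r QQ gg bb))) QQ"
      by (simp add: Psi_def)
    also have "\<dots> = P" unfolding QQ_lv QQ_c0 PI ..
    finally show "(\<lambda>(Q, gb). Psi r Q gb) (Phi r P) = P" unfolding Phi_eq by simp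
  qed
  show "(\<lambda>(Q, gb). Psi r Q gb) ` (SIGMA Q:VVa r m a. AA r Q) \<subseteq> VVa r (Suc m) a"
  proof
    fix z assume "z \<in> (\<lambda>(Q, gb). Psi r Q gb) ` (SIGMA Q:VVa r m a. AA r Q)"
    then obtain Q g b where z: "z = Psi r Q (g, b)" "Q \<in> VVa r m a" "(g, b) \<in> AA r Q" by auto
    have Q: "Q \<in> VV r m" "take (a + 1) Q = replicate a E @ [N]" using z by (auto simp: VVa_def)
    have vQ: "vl r Q" using Q by (simp add: VV_def)
    have gQ: "good r Q" using VV_good[OF Q(1) m] .
    have inV: "Psi r Q (g, b) \<in> VV r (Suc m)"
      using Psi_vl[OF vQ gQ z(3)] Psi_cnt[OF vQ gQ z(3)] Q(1) by (simp add: VV_def)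
    obtain i where i: "1 \<le> i" "i \<le> lv r Q g b" "Q ! (i - 1) = N" using t_after_N[OF vQ gQ z(3)] by blast
    have tl: "lv r Q g b \<le> length Q" "lv r Q g b \<le> length (Psi r Q (g, b))"
      using t_props(1)[OF vQ gQ z(3)] Psi_len[OF vQ gQ z(3)] by auto
    have "take (a + 1) (Psi r Q (g, b)) = replicate a E @ [N]"
      using prefix_equiv[OF Psi_take[OF vQ gQ z(3)] i tl] Q(2) by simp
    then show "z \<in> VVa r (Suc m) a" using inV z by (simp add: VVa_def)
  qed
  show "Phi r ` VVa r (Suc m) a \<subseteq> (SIGMA Q:VVa r m a. AA r Q)"
  proof
    fix z assume "z \<in> Phi r ` VVa r (Suc m) a"
    then obtain P where P: "P \<in> VVa r (Suc m) a" "z = Phi r P" by blast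
    have vP: "vl r P" and gP: "good r P" using P VV_good[of P r "Suc m"] by (auto simp: VVa_def VV_def)
    have cP: "cnt E P = Suc m * r" "cnt N P = 2 * Suc m" "take (a + 1) P = replicate a E @ [N]"
      using P by (auto simp: VVa_def VV_def)
    interpret PP r P using vP gP by unfold_locales
    have inV: "QQ \<in> VV r m" using QQ_vl QQ_cnt' cP by (simp add: VV_def)
    have gQ: "good r QQ" using VV_good[OF inV m] .
    have adm: "(gg, bb) \<in> AA r QQ"
    proof -
      have "gg \<le> uu r QQ" using uu_le[OF gP] QQ_LS uu_mem[OF gQ] by blast
      moreover have "bb \<le> vv r QQ" using vv_le[OF gP] QQ_LS vv_mem[OF gQ] by blast
      moreover have "inl r gg bb (cl r QQ (ss - LL))" using QQ_c0 c0_inl by simp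
      ultimately show ?thesis unfolding AA_def using gb QQ_len(2) by blast
    qed
    have PsiQ: "Psi r QQ (gg, bb) = P"
    proof -
      have "Psi r QQ (gg, bb) = ins (lv r QQ gg bb) (lw r gg bb (cl r QQ (lv r QQ gg bb))) QQ"
        by (simp add: Psi_def)
      also have "\<dots> = P" unfolding QQ_lv QQ_c0 PI ..
      finally show ?thesis .
    qed
    obtain i where i: "1 \<le> i" "i \<le> lv r QQ gg bb" "QQ ! (i - 1) = N" using t_after_N[OF QQ_vl gQ adm] by blast
    have tl: "lv r QQ gg bb \<le> length QQ" "lv r QQ gg bb \<le> length (Psi r QQ (gg, bb))"
      using t_props(1)[OF QQ_vl gQ adm] Psi_len[OF QQ_vl gQ adm] by auto
    have "take (a + 1) QQ = replicate a E @ [N]"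
      using prefix_equiv[OF Psi_take[OF QQ_vl gQ adm] i tl] cP(3) PsiQ by simp
    then show "z \<in> (SIGMA Q:VVa r m a. AA r Q)" using P(2) Phi_eq inV adm by (simp add: VVa_def)
  qed
qed

lemma step_card:
  assumes m: "m \<ge> 1"
  shows "card (VVa r (Suc m) a) = card (VVa r m a) * ((r + 2) choose 2)"
proof -
  have "card (VVa r (Suc m) a) = card (SIGMA Q:VVa r m a. AA r Q)"
    using bij_betw_same_card[OF step_bij[OF m]] by simp
  also have "\<dots> = (\<Sum>Q\<in>VVa r m a. card (AA r Q))"
  proof (rule card_SigmaI[OF VVa_fin])
    show "\<forall>Q\<in>VVa r m a. finite (AA r Q)"
      using AA_card VV_good m by (auto simp: VVa_def)
  qed
  also have "\<dots> = (\<Sum>Q\<in>VVa r m a. (r + 2) choose 2)"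
    using AA_card VV_good m by (intro sum.cong) (auto simp: VVa_def)
  also have "\<dots> = card (VVa r m a) * ((r + 2) choose 2)" by simp
  finally show ?thesis .
qed


lemma cnt_take_mono: "i \<le> j \<Longrightarrow> cnt x (take i ps) \<le> cnt x (take j ps)"
proof -
  assume "i \<le> j"
  then have "take j ps = take i ps @ take (j - i) (drop i ps)" by (metis le_add_diff_inverse take_add)
  then show ?thesis by (metis cnt_append le_add1)
qed

lemma cnt_take_le: "cnt x (take i ps) \<le> cnt x ps"
  by (metis append_take_drop_id cnt_append le_add1)

lemma cnt_take_sum: "i \<le> length ps \<Longrightarrow> cnt E (take i ps) + cnt N (take i ps) = i"
  using cnt_EN[of "take i ps"] by simp

lemma base_valid:
  assumes r: "r > 0" and c: "cnt E ps = r" "cnt N ps = 2"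
  shows "vl r ps"
proof -
  have "valid r 2 ps"
    unfolding valid_def
  proof (intro allI impI)
    fix i j
    assume ij: "1 \<le> i" "i < j" "j \<le> length ps" "ps ! (i - 1) = E" "equiv_pt r 2 (pt ps j) (pt ps i)"
    obtain l :: int where l: "int (cnt E (take j ps)) - int (cnt E (take i ps)) = l * int r"
      "int (cnt N (take j ps)) - int (cnt N (take i ps)) = l * 2"
      using ij(5) by (auto simp: equiv_pt_def pt_alt)
    have m1: "cnt E (take i ps) \<le> cnt E (take j ps)" "cnt N (take i ps) \<le> cnt N (take j ps)"
      using cnt_take_mono ij by auto
    have b1: "cnt E (take j ps) \<le> r" "cnt N (take j ps) \<le> 2" using cnt_take_le c by metis+
    have s1: "cnt E (take i ps) + cnt N (take i ps) = i" "cnt E (take j ps) + cnt N (take j ps) = j"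
      using cnt_take_sum ij by auto
    have "l = 0 \<or> l = 1" using l(2) m1(2) b1(2) by linarith
    then show "ps ! (j - 1) = E"
    proof
      assume "l = 0"
      then show ?thesis using l s1 ij(2) by simp
    next
      assume "l = 1"
      then show ?thesis using l s1 ij(1) b1 m1 by simp
    qed
  qed
  then show ?thesis using valid_vl[OF r] by simp
qed

lemma zero_N: "cnt N xs = 0 \<Longrightarrow> xs = replicate (length xs) E"
proof (induct xs)
  case Nil then show ?case by simp
next
  case (Cons x xs)
  then show ?case using step_cases[of x] by (auto split: if_splits)
qed

lemma one_N: "cnt N xs = 1 \<Longrightarrow> \<exists>j k. xs = replicate j E @ N # replicate k E"
proof (induct xs)
  case Nil then show ?case by simp
next
  case (Cons x xs)
  show ?case
  proof (cases x)
    case E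
    then have "cnt N xs = 1" using Cons by simp
    then obtain j k where "xs = replicate j E @ N # replicate k E" using Cons by blast
    then show ?thesis using E by (intro exI[of _ "Suc j"] exI[of _ k]) simp
  next
    case N
    then have "cnt N xs = 0" using Cons by simp
    then have "xs = replicate (length xs) E" by (rule zero_N)
    then show ?thesis using N by (intro exI[of _ 0] exI[of _ "length xs"]) simp
  qed
qed

lemma tw_rep: "takeWhile (\<lambda>x. x = E) (replicate j E @ N # X) = replicate j E"
  by (induct j) auto

definition hb :: "nat \<Rightarrow> nat \<Rightarrow> nat \<Rightarrow> step list" where
  "hb r a j = replicate a E @ N # replicate j E @ N # replicate (r - a - j) E"

lemma base_card:
  assumes r: "r > 0" and a: "a \<le> r"
  shows "card (VVa r 1 a) = r - a + 1"
proof -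
  have eq: "VVa r 1 a = hb r a ` {0..r - a}"
  proof
    show "VVa r 1 a \<subseteq> hb r a ` {0..r - a}"
    proof
      fix ps assume ps: "ps \<in> VVa r 1 a"
      have c: "cnt E ps = r" "cnt N ps = 2" "take (a + 1) ps = replicate a E @ [N]"
        using ps by (auto simp: VVa_def VV_def)
      define rest where "rest = drop (a + 1) ps"
      have split: "ps = replicate a E @ [N] @ rest"
        using c(3) unfolding rest_def by (metis append_assoc append_take_drop_id)
      have cr: "cnt N rest = 1" "cnt E rest = r - a" using c split by (auto simp del: cnt_Cons) (simp_all add: cnt_def)
      obtain j k where jk: "rest = replicate j E @ N # replicate k E" using one_N[OF cr(1)] by blast
      have "j + k = r - a" using cr(2) jk by simp
      then have "ps = hb r a j" "j \<in> {0..r - a}" using split jk by (auto simp: hb_def)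
      then show "ps \<in> hb r a ` {0..r - a}" by blast
    qed
    show "hb r a ` {0..r - a} \<subseteq> VVa r 1 a"
    proof
      fix ps assume "ps \<in> hb r a ` {0..r - a}"
      then obtain j where j: "j \<le> r - a" "ps = hb r a j" by auto
      have c: "cnt E ps = r" "cnt N ps = 2" using j a by (auto simp: hb_def)
      have t: "take (a + 1) ps = replicate a E @ [N]" using j by (simp add: hb_def)
      show "ps \<in> VVa r 1 a" using c t base_valid[OF r c] by (simp add: VVa_def VV_def)
    qed
  qed
  have inj: "inj_on (hb r a) {0..r - a}"
  proof (rule inj_onI)
    fix j1 j2 assume "hb r a j1 = hb r a j2"
    then have "drop (a + 1) (hb r a j1) = drop (a + 1) (hb r a j2)" by simp
    then have "replicate j1 E @ N # replicate (r - a - j1) E = replicate j2 E @ N # replicate (r - a - j2) E"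
      by (simp add: hb_def)
    then have "takeWhile (\<lambda>x. x = E) (replicate j1 E @ N # replicate (r - a - j1) E) =
               takeWhile (\<lambda>x. x = E) (replicate j2 E @ N # replicate (r - a - j2) E)" by simp
    then show "j1 = j2" unfolding tw_rep by simp
  qed
  show ?thesis unfolding eq card_image[OF inj] by simp
qed

lemma card_VVa: "r > 0 \<Longrightarrow> a \<le> r \<Longrightarrow> n \<ge> 1 \<Longrightarrow> card (VVa r n a) = (r - a + 1) * ((r + 2) choose 2) ^ (n - 1)"
proof (induct n)
  case 0 then show ?case by simp
next
  case (Suc k)
  show ?case
  proof (cases "k = 0")
    case True
    then show ?thesis using base_card[OF Suc.prems(1,2)] by simp
  next
    case False
    then have k: "k \<ge> 1" by simp
    have "card (VVa r (Suc k) a) = card (VVa r k a) * ((r + 2) choose 2)" using step_card[OF k] .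
    also have "\<dots> = (r - a + 1) * ((r + 2) choose 2) ^ (k - 1) * ((r + 2) choose 2)"
      using Suc k by simp
    also have "\<dots> = (r - a + 1) * ((r + 2) choose 2) ^ (Suc k - 1)"
      using k by (cases k) (auto simp: algebra_simps)
    finally show ?thesis .
  qed
qed

theorem mainTheorem5:
  fixes r n a :: nat
  assumes "r > 0" and "n > 0" and "a \<le> r"
  shows "card {ps \<in> valid_paths r 2 (int (n * r), int (2 * n)).
                 take (a + 1) ps = replicate a E @ [N]}
         = (r - a + 1) * ((r + 2) choose 2) ^ (n - 1)"
proof -
  have "{ps \<in> valid_paths r 2 (int (n * r), int (2 * n)). take (a + 1) ps = replicate a E @ [N]} = VVa r n a"
    unfolding VVa_def VV_valid_paths[OF assms(1)] ..
  then show ?thesis using card_VVa[OF assms(1) assms(3)] assms(2) by simp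
qed


end
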